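(* Let $n\ge3$, $J\subseteq\{1,\dots,n\}$ nonempty, $r_k>0$ for $k\in J$, $\mathcal X(J)=\bigcup_{k\in J}\frac{r_k}{\sqrt k}\mathcal I^n_k$, with positive weight functions $w$ constant (value $w_k$) on each $\frac{r_k}{\sqrt k}\mathcal I^n_k$. 1. Suppose $|J|=1$. If $n\not\equiv1\pmod3$, then $(\mathcal X(J),w)$ is never a Euclidean $5$-design. If $n\equiv1\pmod 3$ and $J=\{k\}$, then $(\mathcal X(J),w)$ is a Euclidean $5$-design if and only if $k=\frac{n+2}{3}$; in particular, if $n\equiv 1\pmod3$ and $k=\frac{n+2}3$, then $(\mathcal X(\{k\}),w)$ is a Euclidean $5$-design for any positive $r_k$ and $w_k$. 2. Suppose $|J|\ge2$. Then there is a weight function $w$ for which $(\mathcal X(J),w)$ is a Euclidean $5$-design if and only if there exist $k_1,k_2\in J$ with $k_1<\frac{n+2}{3}<k_2$. In particular, $(\mathcal X(\{1,n\}),w)$ is a Euclidean $5$-design for any positive $r_1,r_n,w_1,w_n$ satisfying $\frac{w_1}{w_n}\cdot\frac{r_1^4}{r_n^4}=\frac{2^n}{n^2}$.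
   Context: $\mathcal I^n_k$ is the set of vectors in $\{-1,0,1\}^n$ with exactly $k$ nonzero entries. For finite $\mathcal X\subset\mathbb R^n\setminus\{0\}$ with positive weights $w$, $R=\{\|x\|\}$ and $W_r=\sum_{\|x\|=r}w(x)$, $(\mathcal X,w)$ is a Euclidean $t$-design if $\sum_{r\in R}W_r\overline f_{S^{n-1}_r}=\sum_{x\in\mathcal X}w(x)f(x)$ for all real polynomials $f$ of degree $\le t$, where $\overline f_{S^{n-1}_r}$ is the average of $f$ over the sphere of radius $r$ centered at the origin. *)

theory Defs
  imports "HOL-Analysis.Analysis"
begin

definition poly_fun_deg :: "nat \<Rightarrow> (real^'n \<Rightarrow> real) \<Rightarrow> bool" where
  "poly_fun_deg t f \<longleftrightarrow>
     (\<exists>(A :: ('n \<Rightarrow> nat) set) c. finite A \<and> (\<forall>a\<in>A. (\<Sum>i\<in>UNIV. a i) \<le> t) \<and>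
        (\<forall>x. f x = (\<Sum>a\<in>A. c a * (\<Prod>i\<in>UNIV. (x $ i) ^ a i))))"

text \<open>Average of f over the sphere of radius r centred at 0, with respect to the
  normalized rotation-invariant (surface) measure on the sphere, realised as the
  image of the uniform probability measure on the unit ball under x \<mapsto> r x/|x|.\<close>
definition sphere_avg :: "real \<Rightarrow> (real^'n \<Rightarrow> real) \<Rightarrow> real" where
  "sphere_avg r f =
     set_lebesgue_integral lborel (ball 0 1) (\<lambda>x. f (r *\<^sub>R (inverse (norm x) *\<^sub>R x)))
       / measure lborel (ball (0::real^'n) 1)"

definition euclidean_design :: "nat \<Rightarrow> (real^'n) set \<Rightarrow> (real^'n \<Rightarrow> real) \<Rightarrow> bool" where
  "euclidean_design t X w \<longleftrightarrow>
     finite X \<and> 0 \<notin> X \<and> (\<forall>x\<in>X. w x > 0) \<and>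
     (\<forall>f. poly_fun_deg t f \<longrightarrow>
        (\<Sum>\<rho>\<in>norm ` X. (\<Sum>x\<in>{x\<in>X. norm x = \<rho>}. w x) * sphere_avg \<rho> f)
          = (\<Sum>x\<in>X. w x * f x))"

definition Ink :: "nat \<Rightarrow> (real^'n) set" where
  "Ink k = {x. (\<forall>i. x $ i \<in> {-1, 0, 1}) \<and> card {i. x $ i \<noteq> 0} = k}"

definition XJ :: "nat set \<Rightarrow> (nat \<Rightarrow> real) \<Rightarrow> (real^'n) set" where
  "XJ J r = (\<Union>k\<in>J. (\<lambda>x. (r k / sqrt (real k)) *\<^sub>R x) ` Ink k)"

text \<open>Weight function taking the value wk k on the shell (r_k/sqrt k) I^n_k
  (a point of that shell has exactly k nonzero coordinates).\<close>
definition shellw :: "(nat \<Rightarrow> real) \<Rightarrow> real^'n \<Rightarrow> real" where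
  "shellw wk x = wk (card {i. x $ i \<noteq> 0})"

end

theory Submission
  imports Defs
begin


datatype 'a wo = Wo (unwo: 'a)

instance wo :: (finite) finite
proof
  have "(UNIV :: 'a wo set) = Wo ` UNIV" by (metis surj_def wo.exhaust)
  then show "finite (UNIV :: 'a wo set)" by (metis finite finite_imageI)
qed

instantiation wo :: (finite) linorder
begin
definition less_eq_wo :: "'a wo \<Rightarrow> 'a wo \<Rightarrow> bool" where
  "less_eq_wo x y \<longleftrightarrow> to_nat (unwo x) \<le> to_nat (unwo y)"
definition less_wo :: "'a wo \<Rightarrow> 'a wo \<Rightarrow> bool" where
  "less_wo x y \<longleftrightarrow> to_nat (unwo x) < to_nat (unwo y)"
instance
proof
  fix x y z :: "'a wo"
  show "(x < y) = (x \<le> y \<and> \<not> y \<le> x)" by (auto simp: less_eq_wo_def less_wo_def)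
  show "x \<le> x" by (simp add: less_eq_wo_def)
  show "x \<le> y \<Longrightarrow> y \<le> z \<Longrightarrow> x \<le> z" by (simp add: less_eq_wo_def)
  show "x \<le> y \<Longrightarrow> y \<le> x \<Longrightarrow> x = y"
    by (metis le_antisym less_eq_wo_def to_nat_split wo.expand)
  show "x \<le> y \<or> y \<le> x" by (auto simp: less_eq_wo_def)
qed
end

instance wo :: (finite) wellorder
proof
  fix P :: "'a wo \<Rightarrow> bool" and a
  assume H: "\<And>x. (\<And>y. y < x \<Longrightarrow> P y) \<Longrightarrow> P x"
  show "P a"
  proof (induction "to_nat (unwo a)" arbitrary: a rule: less_induct)
    case less
    then show ?case using H by (auto simp: less_wo_def)
  qed
qed

lemma prod_Basis_vec: "(\<Prod>b\<in>(Basis :: (real^'k) set). f b) = (\<Prod>i\<in>UNIV. f (axis i 1))"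
  by (simp add: Basis_vec_def prod.UNION_disjoint axis_eq_axis prod.reindex inj_on_def)

definition tw :: "real^'n \<Rightarrow> real^('n wo)" where "tw x = (\<chi> j. x $ unwo j)"
definition utw :: "real^('n wo) \<Rightarrow> real^'n" where "utw y = (\<chi> i. y $ Wo i)"

lemma utw_tw[simp]: "utw (tw x) = x" by (simp add: tw_def utw_def)
lemma tw_utw[simp]: "tw (utw y) = y" by (simp add: tw_def utw_def vec_eq_iff)

lemma tw_meas[measurable]: "tw \<in> borel_measurable borel"
  by (auto simp: tw_def intro!: borel_measurable_continuous_onI continuous_intros)
lemma utw_meas[measurable]: "utw \<in> borel_measurable borel"
  by (auto simp: utw_def intro!: borel_measurable_continuous_onI continuous_intros)

lemma prod_wo: "(\<Prod>j\<in>(UNIV :: 'n wo set). f j) = (\<Prod>i\<in>UNIV. f (Wo i))"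
proof -
  have "(UNIV :: 'n wo set) = Wo ` UNIV" by (metis surj_def wo.exhaust)
  moreover have "inj Wo" by (simp add: inj_on_def)
  ultimately show ?thesis using prod.reindex[of Wo UNIV f] by simp
qed

lemma lborel_tw: "lborel = distr lborel borel (tw :: real^'n \<Rightarrow> _)"
proof (rule lborel_eqI)
  fix l u :: "real^('n wo)" assume le: "\<And>b. b\<in>Basis \<Longrightarrow> l\<bullet>b \<le> u\<bullet>b"
  have pre: "tw -` box l u = box (utw l) (utw u)"
    by (auto simp: mem_box_cart tw_def utw_def; metis wo.sel wo.collapse)
  have le2: "\<forall>b\<in>Basis. utw l \<bullet> b \<le> utw u \<bullet> b"
  proof -
    have "l $ j \<le> u $ j" for j using le[of "axis j 1"] by (auto simp: Basis_vec_def inner_axis)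
    then show ?thesis by (auto simp: Basis_vec_def inner_axis utw_def)
  qed
  have "emeasure (distr lborel borel tw) (box l u) = emeasure lborel (box (utw l) (utw u))"
    by (simp add: emeasure_distr pre)
  also have "\<dots> = (\<Prod>b\<in>Basis. (utw u - utw l) \<bullet> b)"
    using le2 by (simp add: emeasure_lborel_box_eq)
  also have "\<dots> = (\<Prod>b\<in>Basis. (u - l) \<bullet> b)"
    by (simp add: prod_Basis_vec cart_eq_inner_axis[symmetric] utw_def prod_wo)
  finally show "emeasure (distr lborel borel tw) (box l u) = (\<Prod>b\<in>Basis. (u - l) \<bullet> b)" .
qed simp

lemma lborel_orth_wo:
  fixes T :: "(real,'m::{finite,wellorder}) vec \<Rightarrow> (real,'m) vec"
  assumes T: "orthogonal_transformation T"
  shows "lborel = distr lborel borel T"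
proof (rule lborel_eqI)
  have lin: "linear T" using T orthogonal_transformation_linear by blast
  have Tm[measurable]: "T \<in> borel_measurable borel"
    using lin by (intro borel_measurable_continuous_onI linear_continuous_on linear_conv_bounded_linear[THEN iffD1])
  fix l u :: "(real,'m) vec" assume le: "\<And>b. b\<in>Basis \<Longrightarrow> l\<bullet>b \<le> u\<bullet>b"
  let ?G = "inv T"
  have G: "orthogonal_transformation ?G" using T orthogonal_transformation_inv by blast
  have pre: "T -` box l u = ?G ` box l u"
    using T orthogonal_transformation_bij bij_vimage_eq_inv_image by blast
  have bs: "T -` box l u \<in> sets borel" using measurable_sets[OF Tm, of "box l u"] by simp
  have bd: "bounded (T -` box l u)"
    unfolding pre using G orthogonal_transformation_linear
    by (metis bounded_box bounded_linear_image linear_linear)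
  have "emeasure lborel (T -` box l u) = ennreal (measure lborel (T -` box l u))"
    using emeasure_bounded_finite[OF bd] by (simp add: emeasure_eq_ennreal_measure)
  also have "measure lborel (T -` box l u) = measure lebesgue (?G ` box l u)"
    using bs pre by (simp add: measure_completion)
  also have "\<dots> = measure lebesgue (box l u)"
    using G by (simp add: measure_orthogonal_image)
  also have "\<dots> = measure lborel (box l u)" by (simp add: measure_completion)
  also have "ennreal \<dots> = emeasure lborel (box l u)"
    using emeasure_bounded_finite[of "box l u"] by (simp add: emeasure_eq_ennreal_measure)
  finally show "emeasure (distr lborel borel T) (box l u) = (\<Prod>b\<in>Basis. (u - l) \<bullet> b)"
    using le by (simp add: emeasure_distr emeasure_lborel_box_eq)
qed simp

lemma linear_tw: "linear tw" by (auto simp: linear_iff tw_def vec_eq_iff)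
lemma linear_utw: "linear utw" by (auto simp: linear_iff utw_def vec_eq_iff)

lemma sum_wo: "(\<Sum>j\<in>(UNIV :: 'n wo set). f j) = (\<Sum>i\<in>UNIV. f (Wo i))"
proof -
  have "(UNIV :: 'n wo set) = Wo ` UNIV" by (metis surj_def wo.exhaust)
  moreover have "inj Wo" by (simp add: inj_on_def)
  ultimately show ?thesis using sum.reindex[of Wo UNIV f] by simp
qed

lemma norm_tw: "norm (tw x) = norm x"
  by (simp add: norm_eq_sqrt_inner inner_vec_def tw_def sum_wo)

lemma norm_utw: "norm (utw y) = norm y"
  by (metis norm_tw tw_utw)

lemma lborel_utw: "lborel = distr lborel borel (utw :: real^('n wo) \<Rightarrow> real^'n)"
proof -
  have "distr (lborel :: (real^('n wo)) measure) borel utw = distr (distr lborel borel (tw :: real^'n \<Rightarrow> _)) borel utw"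
    using lborel_tw by metis
  also have "\<dots> = distr lborel borel (utw \<circ> tw)" by (simp add: distr_distr)
  also have "\<dots> = distr lborel borel (\<lambda>x::real^'n. x)" by (simp add: comp_def)
  also have "\<dots> = lborel" by (simp add: distr_id2)
  finally show ?thesis by simp
qed

lemma lborel_orth:
  fixes T :: "real^'n \<Rightarrow> real^'n"
  assumes T: "orthogonal_transformation T"
  shows "distr lborel borel T = lborel"
proof -
  define T' where "T' = tw \<circ> T \<circ> utw"
  have linT: "linear T" using T orthogonal_transformation_linear by blast
  have Tm[measurable]: "T \<in> borel_measurable borel"
    using linT by (intro borel_measurable_continuous_onI linear_continuous_on linear_conv_bounded_linear[THEN iffD1])
  have T': "orthogonal_transformation T'"
    unfolding orthogonal_transformation T'_def
    using linT linear_tw linear_utw T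
    by (auto simp: norm_tw norm_utw orthogonal_transformation_norm intro: linear_compose)
  have T'm[measurable]: "T' \<in> borel_measurable borel" unfolding T'_def by measurable
  have eq: "T \<circ> utw = utw \<circ> T'" by (simp add: T'_def fun_eq_iff)
  have "distr lborel borel T = distr (distr (lborel :: (real^('n wo)) measure) borel utw) borel T"
    using lborel_utw by metis
  also have "\<dots> = distr lborel borel (T \<circ> utw)" by (simp add: distr_distr)
  also have "\<dots> = distr lborel borel (utw \<circ> T')" by (simp add: eq)
  also have "\<dots> = distr (distr lborel borel T') borel utw" by (simp add: distr_distr)
  also have "\<dots> = distr lborel borel utw" using lborel_orth_wo[OF T'] by simp
  also have "\<dots> = lborel" using lborel_utw by metis
  finally show ?thesis .
qed

definition gg :: "real \<Rightarrow> real^'n \<Rightarrow> real^'n" where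
  "gg \<rho> x = \<rho> *\<^sub>R (inverse (norm x) *\<^sub>R x)"

lemma ball_borel[measurable]: "ball (0::real^'n) 1 \<in> sets borel" by simp

lemma gg_meas[measurable]: "(\<lambda>x::real^'n. gg \<rho> x) \<in> borel_measurable borel"
  unfolding gg_def by measurable

lemma norm_gg_le: "norm (gg \<rho> x) \<le> \<bar>\<rho>\<bar>"
  by (cases "x = 0") (auto simp: field_simps gg_def)

lemma norm_gg: "x \<noteq> 0 \<Longrightarrow> norm (gg \<rho> x) = \<bar>\<rho>\<bar>"
  by (auto simp: field_simps gg_def)

lemma sa_meas:
  assumes "continuous_on UNIV (f :: real^'n \<Rightarrow> real)"
  shows "(\<lambda>x. f (gg \<rho> x)) \<in> borel_measurable borel"
  using measurable_compose[OF gg_meas borel_measurable_continuous_onI[OF assms]] by simp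

lemma sa_int:
  assumes f: "continuous_on UNIV (f :: real^'n \<Rightarrow> real)"
  shows "integrable lborel (\<lambda>x. indicator (ball 0 1) x *\<^sub>R f (gg \<rho> x))"
proof -
  have "compact (f ` cball 0 \<bar>\<rho>\<bar>)"
    using f by (intro compact_continuous_image) (auto intro: continuous_on_subset)
  then obtain B where B: "\<And>y. y \<in> cball 0 \<bar>\<rho>\<bar> \<Longrightarrow> norm (f y) \<le> B"
    using compact_imp_bounded bounded_iff by (metis image_eqI)
  have "\<And>x. norm (f (gg \<rho> x)) \<le> B"
    by (metis B mem_cball_0 norm_gg_le)
  moreover have "emeasure lborel (ball (0::real^'n) 1) < \<infinity>"
    by (rule emeasure_bounded_finite) simp
  ultimately show ?thesis
    by (intro integrableI_bounded_set_indicator[where B=B]) (auto intro: sa_meas[OF f])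
qed

lemma sa_def2: "sphere_avg \<rho> (f :: real^'n \<Rightarrow> real) = integral\<^sup>L lborel (\<lambda>x. indicator (ball 0 1) x *\<^sub>R f (gg \<rho> x)) / measure lborel (ball (0::real^'n) 1)"
  unfolding sphere_avg_def set_lebesgue_integral_def gg_def by (rule refl)

lemma sa_add:
  assumes "continuous_on UNIV (f :: real^'n \<Rightarrow> real)" "continuous_on UNIV g"
  shows "sphere_avg \<rho> (\<lambda>x. f x + g x) = sphere_avg \<rho> f + sphere_avg \<rho> g"
proof -
  have "integral\<^sup>L lborel (\<lambda>x. indicator (ball 0 1) x *\<^sub>R (f (gg \<rho> x) + g (gg \<rho> x))) =
        integral\<^sup>L lborel (\<lambda>x. indicator (ball 0 1) x *\<^sub>R f (gg \<rho> x) + indicator (ball 0 1) x *\<^sub>R g (gg \<rho> x))"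
    by (simp add: algebra_simps)
  also have "\<dots> = integral\<^sup>L lborel (\<lambda>x. indicator (ball 0 1) x *\<^sub>R f (gg \<rho> x)) + integral\<^sup>L lborel (\<lambda>x. indicator (ball 0 1) x *\<^sub>R g (gg \<rho> x))"
    by (rule Bochner_Integration.integral_add[OF sa_int[OF assms(1)] sa_int[OF assms(2)]])
  finally show ?thesis by (simp add: sa_def2 add_divide_distrib)
qed

lemma sa_cmult:
  shows "sphere_avg \<rho> (\<lambda>x. c * f x) = c * sphere_avg \<rho> (f :: real^'n \<Rightarrow> real)"
proof -
  have "integral\<^sup>L lborel (\<lambda>x. indicator (ball 0 1) x *\<^sub>R (c * f (gg \<rho> x))) =
        integral\<^sup>L lborel (\<lambda>x. c * (indicator (ball 0 1) x *\<^sub>R f (gg \<rho> x)))"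
    by (simp add: algebra_simps)
  also have "\<dots> = c * integral\<^sup>L lborel (\<lambda>x. indicator (ball 0 1) x *\<^sub>R f (gg \<rho> x))"
    by (rule integral_mult_right_zero)
  finally show ?thesis by (simp add: sa_def2)
qed

lemma sa_sum:
  assumes "finite A" "\<And>a. a \<in> A \<Longrightarrow> continuous_on UNIV (F a :: real^'n \<Rightarrow> real)"
  shows "sphere_avg \<rho> (\<lambda>x. \<Sum>a\<in>A. F a x) = (\<Sum>a\<in>A. sphere_avg \<rho> (F a))"
  using assms
proof (induction A rule: finite_induct)
  case empty
  then show ?case using sa_cmult[of \<rho> 0 "\<lambda>x. 0"] by simp
next
  case (insert a A)
  have "sphere_avg \<rho> (\<lambda>x. \<Sum>a\<in>insert a A. F a x) = sphere_avg \<rho> (\<lambda>x. F a x + (\<Sum>a\<in>A. F a x))"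
    using insert by simp
  also have "\<dots> = sphere_avg \<rho> (F a) + sphere_avg \<rho> (\<lambda>x. \<Sum>a\<in>A. F a x)"
    using insert by (intro sa_add) (auto intro!: continuous_on_sum)
  finally show ?case using insert by simp
qed

lemma sa_inv:
  assumes T: "orthogonal_transformation (T :: real^'n \<Rightarrow> real^'n)" and f: "continuous_on UNIV (f :: real^'n \<Rightarrow> real)"
  shows "sphere_avg \<rho> (\<lambda>x. f (T x)) = sphere_avg \<rho> f"
proof -
  define H where "H = (\<lambda>y. indicator (ball (0::real^'n) 1) y *\<^sub>R f (gg \<rho> y))"
  have linT: "linear T" using T orthogonal_transformation_linear by blast
  have Tm[measurable]: "T \<in> borel_measurable borel"
    using linT by (intro borel_measurable_continuous_onI linear_continuous_on linear_conv_bounded_linear[THEN iffD1])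
  have Hm: "H \<in> borel_measurable borel"
    unfolding H_def using sa_meas[OF f, measurable] by measurable
  have eq: "indicator (ball 0 1) x *\<^sub>R f (T (gg \<rho> x)) = H (T x)" for x
    using orthogonal_transformation_norm[OF T, of x] linear_cmul[OF linT]
    by (simp add: H_def indicator_def gg_def)
  have "integral\<^sup>L lborel (\<lambda>x. indicator (ball 0 1) x *\<^sub>R f (T (gg \<rho> x))) = integral\<^sup>L lborel (\<lambda>x. H (T x))"
    by (simp only: eq)
  also have "\<dots> = integral\<^sup>L (distr lborel borel T) H"
    using Hm by (simp add: integral_distr)
  also have "\<dots> = integral\<^sup>L lborel H" using lborel_orth[of T] T by simp
  finally show ?thesis by (simp add: sa_def2 H_def)
qed

lemma sa_const:
  assumes "\<rho> \<noteq> 0" and f: "continuous_on UNIV (f :: real^'n \<Rightarrow> real)"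
    and c: "\<And>y. norm y = \<bar>\<rho>\<bar> \<Longrightarrow> f y = c"
  shows "sphere_avg \<rho> f = c"
proof -
  have "integral\<^sup>L lborel (\<lambda>x. indicator (ball (0::real^'n) 1) x *\<^sub>R f (gg \<rho> x)) =
        integral\<^sup>L lborel (\<lambda>x. c * indicator (ball (0::real^'n) 1) x)"
  proof (rule integral_cong_AE)
    show "(\<lambda>x. indicator (ball (0::real^'n) 1) x *\<^sub>R f (gg \<rho> x)) \<in> borel_measurable lborel"
      using sa_meas[OF f, measurable] by measurable
    show "(\<lambda>x. c * indicator (ball (0::real^'n) 1) x) \<in> borel_measurable lborel" by measurable
    show "AE x in lborel. indicator (ball 0 1) x *\<^sub>R f (gg \<rho> x) = c * indicator (ball (0::real^'n) 1) x"
      using AE_lborel_singleton[of "0::real^'n"]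
      by eventually_elim (use c norm_gg in \<open>auto simp: indicator_def\<close>)
  qed
  also have "\<dots> = c * measure lborel (ball (0::real^'n) 1)"
    by (simp add: emeasure_bounded_finite less_top[symmetric])
  finally show ?thesis using content_ball_pos[of 1 "0::real^'n"] by (simp add: sa_def2)
qed

definition flip :: "'n \<Rightarrow> real^'n \<Rightarrow> real^'n" where
  "flip i x = (\<chi> k. if k = i then - x $ k else x $ k)"
definition swp :: "'n \<Rightarrow> 'n \<Rightarrow> 'n \<Rightarrow> 'n" where
  "swp a b k = (if k = a then b else if k = b then a else k)"
definition sw :: "'n \<Rightarrow> 'n \<Rightarrow> real^'n \<Rightarrow> real^'n" where
  "sw a b x = (\<chi> k. x $ swp a b k)"
definition rot :: "'n \<Rightarrow> 'n \<Rightarrow> real^'n \<Rightarrow> real^'n" where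
  "rot i j x = (\<chi> k. if k = i then (x $ i + x $ j) / sqrt 2 else if k = j then (x $ i - x $ j) / sqrt 2 else x $ k)"

lemma swp_swp[simp]: "swp a b (swp a b k) = k" by (auto simp: swp_def)
lemma bij_swp: "bij (swp a b)" by (metis bijI' swp_swp)
lemma flip_flip[simp]: "flip i (flip i x) = x" by (simp add: flip_def vec_eq_iff)
lemma sw_sw[simp]: "sw a b (sw a b x) = x" by (simp add: sw_def vec_eq_iff)

lemma flip_nth: "flip i x $ k = (if k = i then - x $ k else x $ k)" by (simp add: flip_def)
lemma sw_nth: "sw a b x $ k = x $ swp a b k" by (simp add: sw_def)

lemma orth_by_inner:
  assumes "linear (T :: real^'n \<Rightarrow> real^'n)" "\<And>x. (\<Sum>k\<in>UNIV. (T x $ k)^2) = (\<Sum>k\<in>UNIV. (x $ k)^2)"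
  shows "orthogonal_transformation T"
  unfolding orthogonal_transformation using assms
  by (simp add: norm_eq_sqrt_inner inner_vec_def power2_eq_square)

lemma orth_flip: "orthogonal_transformation (flip i)"
  by (rule orth_by_inner) (auto simp: linear_iff flip_def vec_eq_iff intro!: sum.cong)

lemma orth_sw: "orthogonal_transformation (sw a b :: real^'n \<Rightarrow> real^'n)"
proof (rule orth_by_inner)
  show "linear (sw a b)" by (auto simp: linear_iff sw_def vec_eq_iff)
  fix x :: "real^'n"
  show "(\<Sum>k\<in>UNIV. (sw a b x $ k)^2) = (\<Sum>k\<in>UNIV. (x $ k)^2)"
    using sum.reindex_bij_betw[OF bij_swp[of a b], of "\<lambda>k. (x $ k)^2"] by (simp add: sw_def)
qed

lemma sum_two:
  fixes F :: "'n::finite \<Rightarrow> real"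
  assumes "i \<noteq> j"
  shows "(\<Sum>k\<in>UNIV. F k) = F i + F j + (\<Sum>k\<in>UNIV - {i, j}. F k)"
proof -
  have "(\<Sum>k\<in>UNIV. F k) = F i + (\<Sum>k\<in>UNIV - {i}. F k)" by (rule sum.remove) auto
  also have "(\<Sum>k\<in>UNIV - {i}. F k) = F j + (\<Sum>k\<in>UNIV - {i} - {j}. F k)"
    using assms by (intro sum.remove) auto
  finally show ?thesis by (simp add: Diff_insert2[symmetric] insert_commute)
qed

lemma orth_rot:
  assumes ij: "i \<noteq> j"
  shows "orthogonal_transformation (rot i j :: real^'n \<Rightarrow> real^'n)"
proof (rule orth_by_inner)
  show "linear (rot i j)" by (auto simp: linear_iff rot_def vec_eq_iff field_simps)
  fix x :: "real^'n"
  have s2: "(sqrt 2)^2 = (2::real)" by simp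
  have "(\<Sum>k\<in>UNIV. (rot i j x $ k)^2) = ((x $ i + x $ j) / sqrt 2)^2 + ((x $ i - x $ j) / sqrt 2)^2 + (\<Sum>k\<in>UNIV - {i, j}. (x $ k)^2)"
    using ij by (subst sum_two[OF ij]) (auto simp: rot_def intro!: sum.cong)
  also have "((x $ i + x $ j) / sqrt 2)^2 + ((x $ i - x $ j) / sqrt 2)^2 = (x $ i)^2 + (x $ j)^2"
    by (simp add: power_divide s2 field_simps power2_eq_square)
  finally show "(\<Sum>k\<in>UNIV. (rot i j x $ k)^2) = (\<Sum>k\<in>UNIV. (x $ k)^2)"
    using sum_two[OF ij, of "\<lambda>k. (x $ k)^2"] by simp
qed

lemma normsq: "(norm (y::real^'n))^2 = (\<Sum>j\<in>UNIV. (y $ j)^2)"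
  unfolding power2_norm_eq_inner inner_vec_def by (simp add: power2_eq_square)

lemma sa_neg: "sphere_avg \<rho> (\<lambda>x. - f x) = - sphere_avg \<rho> (f :: real^'n \<Rightarrow> real)"
  using sa_cmult[of \<rho> "-1" f] by simp

lemma sa_odd:
  assumes f: "continuous_on UNIV (f :: real^'n \<Rightarrow> real)" and odd: "\<And>x. f (flip i x) = - f x"
  shows "sphere_avg \<rho> f = 0"
proof -
  have "sphere_avg \<rho> f = sphere_avg \<rho> (\<lambda>x. f (flip i x))"
    using sa_inv[OF orth_flip f] by simp
  also have "\<dots> = - sphere_avg \<rho> f" by (simp add: odd sa_neg)
  finally show ?thesis by simp
qed

lemma sa_sw:
  assumes f: "continuous_on UNIV (f :: real^'n \<Rightarrow> real)"
  shows "sphere_avg \<rho> (\<lambda>x. f (sw a b x)) = sphere_avg \<rho> f"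
  using sa_inv[OF orth_sw f] .

lemma cont_nth_pow[continuous_intros]: "continuous_on UNIV (\<lambda>x::real^'n. (x $ i) ^ e)"
  by (intro continuous_intros)

lemma sa_sq_eq: "sphere_avg \<rho> (\<lambda>x::real^'n. (x $ i)^e) = sphere_avg \<rho> (\<lambda>x::real^'n. (x $ j)^e)"
proof -
  have "sphere_avg \<rho> (\<lambda>x::real^'n. (x $ j)^e) = sphere_avg \<rho> (\<lambda>x. (sw i j x $ j)^e)"
    using sa_sw[of "\<lambda>x::real^'n. (x $ j)^e" \<rho> i j] by (simp add: cont_nth_pow)
  also have "\<dots> = sphere_avg \<rho> (\<lambda>x::real^'n. (x $ i)^e)"
    by (simp add: sw_nth swp_def)
  finally show ?thesis by simp
qed

lemma sa_sq:
  assumes "\<rho> \<noteq> 0"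
  shows "sphere_avg \<rho> (\<lambda>x::real^'n. (x $ i)^2) = \<rho>^2 / CARD('n)"
proof -
  have "sphere_avg \<rho> (\<lambda>x::real^'n. \<Sum>j\<in>UNIV. (x $ j)^2) = \<rho>^2"
    by (rule sa_const[OF assms]) (auto intro!: continuous_intros simp: normsq[symmetric])
  moreover have "sphere_avg \<rho> (\<lambda>x::real^'n. \<Sum>j\<in>UNIV. (x $ j)^2) = (\<Sum>j\<in>(UNIV::'n set). sphere_avg \<rho> (\<lambda>x::real^'n. (x $ j)^2))"
    by (rule sa_sum) (auto intro!: continuous_intros)
  moreover have "\<dots> = (\<Sum>j\<in>(UNIV::'n set). sphere_avg \<rho> (\<lambda>x::real^'n. (x $ i)^2))"
    by (rule sum.cong[OF refl], rule sa_sq_eq)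
  moreover have "\<dots> = CARD('n) * sphere_avg \<rho> (\<lambda>x::real^'n. (x $ i)^2)" by simp
  ultimately show ?thesis by (simp add: field_simps)
qed

lemma sa_div: "sphere_avg \<rho> (\<lambda>x. f x / c) = sphere_avg \<rho> (f :: real^'n \<Rightarrow> real) / c"
  using sa_cmult[of \<rho> "inverse c" f] by (simp add: field_simps)

lemma sa_rel:
  assumes ij: "i \<noteq> j"
  shows "sphere_avg \<rho> (\<lambda>x::real^'n. (x $ i)^2 * (x $ j)^2) = sphere_avg \<rho> (\<lambda>x::real^'n. (x $ i)^4) / 3"
proof -
  define A4 where "A4 = (\<lambda>x::real^'n. (x $ i)^4)"
  define B4 where "B4 = (\<lambda>x::real^'n. (x $ j)^4)"
  define C where "C = (\<lambda>x::real^'n. (x $ i)^2 * (x $ j)^2)"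
  define O1 where "O1 = (\<lambda>x::real^'n. (x $ i)^3 * (x $ j))"
  define O2 where "O2 = (\<lambda>x::real^'n. (x $ i) * (x $ j)^3)"
  have cA: "continuous_on UNIV A4" and cB: "continuous_on UNIV B4" and cC: "continuous_on UNIV C"
    and cO1: "continuous_on UNIV O1" and cO2: "continuous_on UNIV O2"
    unfolding A4_def B4_def C_def O1_def O2_def by (auto intro!: continuous_intros)
  have s4: "(sqrt 2)^4 = (4::real)"
    by (metis num_double numeral_times_numeral power2_eq_square power_mult real_sqrt_pow2 zero_le_numeral mult_2_right numeral_Bit0 power2_eq_square) 
  have pt: "A4 (rot i j x) = (1/4) * A4 x + (O1 x + ((3/2) * C x + (O2 x + (1/4) * B4 x)))" for x
  proof -
    have "A4 (rot i j x) = (x $ i + x $ j)^4 / (sqrt 2)^4"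
      by (simp add: A4_def rot_def power_divide)
    also have "\<dots> = (x $ i + x $ j)^4 / 4" by (simp add: s4)
    finally show ?thesis by (simp add: A4_def B4_def C_def O1_def O2_def field_simps power_def eval_nat_numeral)
  qed
  have o1: "sphere_avg \<rho> O1 = 0"
    by (rule sa_odd[OF cO1, of j]) (use ij in \<open>simp add: O1_def flip_nth\<close>)
  have o2: "sphere_avg \<rho> O2 = 0"
    by (rule sa_odd[OF cO2, of i]) (use ij in \<open>simp add: O2_def flip_nth power_def eval_nat_numeral\<close>)
  have b: "sphere_avg \<rho> B4 = sphere_avg \<rho> A4"
    unfolding A4_def B4_def by (rule sa_sq_eq)
  have "sphere_avg \<rho> A4 = sphere_avg \<rho> (\<lambda>x. A4 (rot i j x))"
    using sa_inv[OF orth_rot[OF ij] cA] by simp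
  also have "\<dots> = sphere_avg \<rho> (\<lambda>x. (1/4) * A4 x + (O1 x + ((3/2) * C x + (O2 x + (1/4) * B4 x))))"
    by (simp add: pt)
  also have "\<dots> = (1/4) * sphere_avg \<rho> A4 + (sphere_avg \<rho> O1 + ((3/2) * sphere_avg \<rho> C + (sphere_avg \<rho> O2 + (1/4) * sphere_avg \<rho> B4)))"
    using cA cB cC cO1 cO2
    by (simp add: sa_add sa_cmult sa_div continuous_intros)
  finally show ?thesis using o1 o2 b by (simp add: C_def A4_def)
qed

lemma sa_4:
  assumes "\<rho> \<noteq> 0"
  shows "sphere_avg \<rho> (\<lambda>x::real^'n. (x $ i)^4) = 3 * \<rho>^4 / (CARD('n) * (CARD('n) + 2))"
proof -
  define n where "n = CARD('n)"
  define \<alpha> where "\<alpha> = sphere_avg \<rho> (\<lambda>x::real^'n. (x $ i)^4)"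
  have n1: "n \<ge> 1" unfolding n_def by (simp add: Suc_leI)
  have "sphere_avg \<rho> (\<lambda>x::real^'n. \<Sum>k\<in>UNIV. \<Sum>j\<in>UNIV. (x $ k)^2 * (x $ j)^2) = \<rho>^4"
  proof (rule sa_const[OF assms])
    show "continuous_on UNIV (\<lambda>x::real^'n. \<Sum>k\<in>UNIV. \<Sum>j\<in>UNIV. (x $ k)^2 * (x $ j)^2)"
      by (auto intro!: continuous_intros)
    fix y :: "real^'n" assume "norm y = \<bar>\<rho>\<bar>"
    then have "(\<Sum>j\<in>UNIV. (y $ j)^2) = \<rho>^2" using normsq[of y] by simp
    then have "(\<Sum>k\<in>UNIV. \<Sum>j\<in>UNIV. (y $ k)^2 * (y $ j)^2) = (\<rho>^2)^2"
      by (metis (no_types) power2_eq_square sum_product)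
    then show "(\<Sum>k\<in>UNIV. \<Sum>j\<in>UNIV. (y $ k)^2 * (y $ j)^2) = \<rho>^4" by simp
  qed
  moreover have "sphere_avg \<rho> (\<lambda>x::real^'n. \<Sum>k\<in>UNIV. \<Sum>j\<in>UNIV. (x $ k)^2 * (x $ j)^2)
      = (\<Sum>k\<in>UNIV. \<Sum>j\<in>UNIV. sphere_avg \<rho> (\<lambda>x::real^'n. (x $ k)^2 * (x $ j)^2))"
    by (subst sa_sum) (auto intro!: continuous_intros sum.cong sa_sum)
  moreover have "(\<Sum>j\<in>UNIV. sphere_avg \<rho> (\<lambda>x::real^'n. (x $ k)^2 * (x $ j)^2)) = \<alpha> + (n - 1) * \<alpha> / 3" for k
  proof -
    have "(\<Sum>j\<in>UNIV. sphere_avg \<rho> (\<lambda>x::real^'n. (x $ k)^2 * (x $ j)^2))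
        = sphere_avg \<rho> (\<lambda>x::real^'n. (x $ k)^2 * (x $ k)^2) + (\<Sum>j\<in>UNIV-{k}. sphere_avg \<rho> (\<lambda>x::real^'n. (x $ k)^2 * (x $ j)^2))"
      by (rule sum.remove) auto
    also have "sphere_avg \<rho> (\<lambda>x::real^'n. (x $ k)^2 * (x $ k)^2) = \<alpha>"
      unfolding \<alpha>_def by (simp add: sa_sq_eq[of \<rho> k 4 i] flip: power_add)
    also have "(\<Sum>j\<in>UNIV-{k}. sphere_avg \<rho> (\<lambda>x::real^'n. (x $ k)^2 * (x $ j)^2)) = (\<Sum>j\<in>UNIV-{k}. \<alpha> / 3)"
      by (rule sum.cong[OF refl]) (auto simp: sa_rel \<alpha>_def sa_sq_eq[of \<rho> k 4 i])
    also have "\<dots> = (n - 1) * \<alpha> / 3" by (simp add: n_def card_Diff_singleton)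
    finally show ?thesis using n1 by (simp add: of_nat_diff)
  qed
  ultimately have "n * (\<alpha> + (n - 1) * \<alpha> / 3) = \<rho>^4" by (simp add: n_def)
  then have "\<alpha> * (n * (n + 2)) = 3 * \<rho>^4" using n1 by (simp add: of_nat_diff field_simps)
  moreover have "real n * (n + 2) > 0" using n1 by simp
  ultimately show ?thesis unfolding \<alpha>_def n_def[symmetric] by (simp add: field_simps)
qed

lemma sa_22:
  assumes "\<rho> \<noteq> 0" "i \<noteq> j"
  shows "sphere_avg \<rho> (\<lambda>x::real^'n. (x $ i)^2 * (x $ j)^2) = \<rho>^4 / (CARD('n) * (CARD('n) + 2))"
proof -
  have X: "sphere_avg \<rho> (\<lambda>x::real^'n. (x $ i)^4) / 3 = \<rho>^4 / (CARD('n) * (CARD('n) + 2))"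
  proof -
    have aux: "(3::real) * a / N / 3 = a / N" for a N by simp
    show ?thesis unfolding sa_4[OF assms(1), of i] by (rule aux)
  qed
  show ?thesis unfolding sa_rel[OF assms(2)] by (rule X)
qed

definition mon :: "('n \<Rightarrow> nat) \<Rightarrow> real^'n \<Rightarrow> real" where
  "mon a x = (\<Prod>i\<in>UNIV. (x $ i) ^ a i)"

lemma cont_mon: "continuous_on UNIV (mon a :: real^'n \<Rightarrow> real)"
  unfolding mon_def by (auto intro!: continuous_intros)

lemma mon_flip:
  assumes "odd (a i)"
  shows "mon a (flip i x) = - mon a (x :: real^'n)"
proof -
  have "mon a (flip i x) = (\<Prod>k\<in>UNIV. (if k = i then -1 else 1) * (x $ k) ^ a k)"
    unfolding mon_def using assms by (intro prod.cong) (auto simp: flip_nth)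
  also have "\<dots> = (\<Prod>k\<in>UNIV. (if k = i then -1 else 1)) * mon a x"
    by (simp add: prod.distrib mon_def)
  also have "(\<Prod>k\<in>UNIV. (if k = i then -1 else 1::real)) = -1"
    by simp
  finally show ?thesis by simp
qed

lemma mon_0: "mon (\<lambda>_. 0) x = 1" by (simp add: mon_def)

lemma mon_1: "mon (\<lambda>k. if k = i then e else 0) x = (x $ i) ^ e"
proof -
  have "mon (\<lambda>k. if k = i then e else 0) x = (\<Prod>k\<in>UNIV. if k = i then (x $ k) ^ e else 1)"
    unfolding mon_def by (intro prod.cong) auto
  then show ?thesis by simp
qed

lemma mon_2:
  assumes "i \<noteq> j"
  shows "mon (\<lambda>k. if k = i then 2 else if k = j then 2 else 0) x = (x $ i)^2 * (x $ j)^2"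
proof -
  have "mon (\<lambda>k. if k = i then 2 else if k = j then 2 else 0) x
      = (\<Prod>k\<in>UNIV. (if k = i then (x $ k)^2 else 1) * (if k = j then (x $ k)^2 else 1))"
    unfolding mon_def using assms by (intro prod.cong) auto
  then show ?thesis by (simp add: prod.distrib)
qed

lemma mon_class:
  fixes a :: "'n::finite \<Rightarrow> nat"
  assumes ev: "\<And>i. even (a i)" and s: "(\<Sum>i\<in>UNIV. a i) \<le> 5"
  shows "a = (\<lambda>_. 0) \<or> (\<exists>i. a = (\<lambda>k. if k = i then 2 else 0)) \<or> (\<exists>i. a = (\<lambda>k. if k = i then 4 else 0))
     \<or> (\<exists>i j. i \<noteq> j \<and> a = (\<lambda>k. if k = i then 2 else if k = j then 2 else 0))"
proof -
  define S where "S = {k. a k \<noteq> 0}"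
  have ge2: "k \<in> S \<Longrightarrow> a k \<ge> 2" for k using ev[of k] by (auto simp: S_def elim!: evenE)
  have sumS: "(\<Sum>i\<in>UNIV. a i) = (\<Sum>i\<in>S. a i)"
    by (rule sum.mono_neutral_right) (auto simp: S_def)
  have "2 * card S = (\<Sum>i\<in>S. 2)" by simp
  also have "\<dots> \<le> (\<Sum>i\<in>S. a i)" by (intro sum_mono ge2)
  finally have cS: "2 * card S \<le> 5" using s sumS by simp
  have out: "k \<notin> S \<Longrightarrow> a k = 0" for k by (simp add: S_def)
  consider "card S = 0" | "card S = 1" | "card S = 2" using cS by linarith
  then show ?thesis
  proof cases
    case 1
    then have "S = {}" by simp
    then have "a = (\<lambda>_. 0)" using out by auto
    then show ?thesis by simp
  next
    case 2
    then obtain i where Si: "S = {i}" using card_1_singletonE by blast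
    then have "a i \<le> 5" using s sumS by simp
    moreover have "a i \<ge> 2" using ge2 Si by simp
    moreover have "even (a i)" by (rule ev)
    ultimately have "a i = 2 \<or> a i = 4" by presburger
    moreover have "k \<noteq> i \<Longrightarrow> a k = 0" for k using out Si by auto
    ultimately show ?thesis by (auto simp: fun_eq_iff)
  next
    case 3
    then obtain i j where ij: "i \<noteq> j" and Sij: "S = {i, j}" using card_2_iff by metis
    then have "a i + a j \<le> 5" using s sumS by simp
    moreover have "a i \<ge> 2" "a j \<ge> 2" using ge2 Sij by auto
    moreover have "even (a i)" "even (a j)" by (rule ev)+
    ultimately have "a i = 2" "a j = 2" by presburger+
    moreover have "k \<noteq> i \<Longrightarrow> k \<noteq> j \<Longrightarrow> a k = 0" for k using out Sij by auto
    ultimately have "a = (\<lambda>k. if k = i then 2 else if k = j then 2 else 0)" by (auto simp: fun_eq_iff)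
    then show ?thesis using ij by blast
  qed
qed

lemma design_generic:
  fixes X :: "(real^'n) set" and w :: "real^'n \<Rightarrow> real" and i0 j0 :: 'n
  assumes fin: "finite X" and X0: "0 \<notin> X" and wpos: "\<forall>x\<in>X. w x > 0"
    and invf: "\<And>f i. (\<Sum>x\<in>X. w x * f (flip i x)) = (\<Sum>x\<in>X. w x * f x)"
    and invs: "\<And>f a b. (\<Sum>x\<in>X. w x * f (sw a b x)) = (\<Sum>x\<in>X. w x * f x)"
    and ij0: "i0 \<noteq> j0"
  shows "euclidean_design 5 X w \<longleftrightarrow>
    (\<Sum>x\<in>X. w x * (x $ i0)^4) = 3 * (\<Sum>x\<in>X. w x * ((x $ i0)^2 * (x $ j0)^2))"
proof -
  define SX where "SX f = (\<Sum>x\<in>X. w x * f x)" for f :: "real^'n \<Rightarrow> real"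
  define E where "E f = (\<Sum>x\<in>X. w x * sphere_avg (norm x) f) - SX f" for f :: "real^'n \<Rightarrow> real"
  define n where "n = real CARD('n)"
  define Aq where "Aq = SX (\<lambda>x. (x $ i0)^4)"
  define Bq where "Bq = SX (\<lambda>x. (x $ i0)^2 * (x $ j0)^2)"
  have "card {i0, j0} \<le> CARD('n)" by (rule card_mono) auto
  then have n2: "n \<ge> 2" using ij0 by (simp add: n_def)
  have nz: "x \<in> X \<Longrightarrow> norm x \<noteq> 0" for x using X0 by auto
  have reg: "(\<Sum>\<rho>\<in>norm ` X. (\<Sum>x\<in>{x\<in>X. norm x = \<rho>}. w x) * sphere_avg \<rho> f) = (\<Sum>x\<in>X. w x * sphere_avg (norm x) f)" for f
  proof -
    have "(\<Sum>\<rho>\<in>norm ` X. (\<Sum>x\<in>{x\<in>X. norm x = \<rho>}. w x) * sphere_avg \<rho> f)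
        = (\<Sum>\<rho>\<in>norm ` X. \<Sum>x\<in>{x\<in>X. norm x = \<rho>}. w x * sphere_avg (norm x) f)"
      by (intro sum.cong refl) (auto simp: sum_distrib_right)
    also have "\<dots> = (\<Sum>x\<in>X. w x * sphere_avg (norm x) f)"
      by (rule sum.group) (use fin in auto)
    finally show ?thesis .
  qed
  have des: "euclidean_design 5 X w \<longleftrightarrow> (\<forall>f. poly_fun_deg 5 f \<longrightarrow> E f = 0)"
    unfolding euclidean_design_def E_def SX_def reg using fin X0 wpos by auto
  have SX_odd: "SX (mon a) = 0" if "odd (a i)" for a i
  proof -
    have "SX (mon a) = SX (\<lambda>x. mon a (flip i x))" unfolding SX_def by (rule invf[symmetric])
    also have "\<dots> = - SX (mon a)" unfolding SX_def using that by (simp add: mon_flip sum_negf)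
    finally show ?thesis by simp
  qed
  have SX_1: "SX (\<lambda>x. (x $ i)^e) = SX (\<lambda>x. (x $ i0)^e)" for i e
    using invs[of "\<lambda>x. (x $ i0)^e" i0 i] by (simp add: SX_def sw_nth swp_def)
  have SX_2: "SX (\<lambda>x. (x $ i)^2 * (x $ j)^2) = Bq" if ij: "i \<noteq> j" for i j
  proof -
    define j' where "j' = swp i0 i j0"
    have j'i: "j' \<noteq> i" using ij0 by (auto simp: j'_def swp_def)
    have "SX (\<lambda>x. (x $ i)^2 * (x $ j')^2) = Bq"
      using invs[of "\<lambda>x. (x $ i0)^2 * (x $ j0)^2" i0 i] by (simp add: SX_def Bq_def sw_nth swp_def j'_def)
    moreover have "SX (\<lambda>x. (x $ i)^2 * (x $ j)^2) = SX (\<lambda>x. (x $ i)^2 * (x $ j')^2)"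
      using invs[of "\<lambda>x. (x $ i)^2 * (x $ j')^2" j' j] j'i ij by (simp add: SX_def sw_nth swp_def)
    ultimately show ?thesis by simp
  qed
  have SX_sum: "SX (\<lambda>x. \<Sum>j\<in>UNIV. F j x) = (\<Sum>j\<in>UNIV. SX (F j))" for F :: "'n \<Rightarrow> real^'n \<Rightarrow> real"
    unfolding SX_def by (simp add: sum_distrib_left sum.swap[of _ X])
  have N2: "SX (\<lambda>x. (norm x)^2) = n * SX (\<lambda>x. (x $ i0)^2)"
  proof -
    have "SX (\<lambda>x. (norm x)^2) = SX (\<lambda>x. \<Sum>j\<in>UNIV. (x $ j)^2)" by (simp add: normsq)
    also have "\<dots> = (\<Sum>j\<in>UNIV. SX (\<lambda>x. (x $ j)^2))" by (rule SX_sum)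
    also have "\<dots> = (\<Sum>j\<in>(UNIV::'n set). SX (\<lambda>x. (x $ i0)^2))" by (rule sum.cong[OF refl], rule SX_1)
    finally show ?thesis by (simp add: n_def)
  qed
  have N4: "SX (\<lambda>x. (norm x)^4) = n * (Aq + (n - 1) * Bq)"
  proof -
    have "(norm x)^4 = (\<Sum>k\<in>UNIV. \<Sum>j\<in>UNIV. (x $ k)^2 * (x $ j)^2)" for x :: "real^'n"
    proof -
      have "(norm x)^4 = ((norm x)^2)^2" by simp
      also have "\<dots> = (\<Sum>k\<in>UNIV. \<Sum>j\<in>UNIV. (x $ k)^2 * (x $ j)^2)"
        unfolding normsq by (simp add: power2_eq_square sum_product)
      finally show ?thesis .
    qed
    then have "SX (\<lambda>x. (norm x)^4) = SX (\<lambda>x. \<Sum>k\<in>UNIV. \<Sum>j\<in>UNIV. (x $ k)^2 * (x $ j)^2)" by simp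
    also have "\<dots> = (\<Sum>k\<in>UNIV. \<Sum>j\<in>UNIV. SX (\<lambda>x. (x $ k)^2 * (x $ j)^2))"
      by (simp add: SX_sum)
    also have "\<dots> = (\<Sum>k\<in>(UNIV::'n set). Aq + (n - 1) * Bq)"
    proof (rule sum.cong[OF refl])
      fix k :: 'n
      have "(\<Sum>j\<in>UNIV. SX (\<lambda>x. (x $ k)^2 * (x $ j)^2)) = SX (\<lambda>x. (x $ k)^2 * (x $ k)^2) + (\<Sum>j\<in>UNIV-{k}. SX (\<lambda>x. (x $ k)^2 * (x $ j)^2))"
        by (rule sum.remove) auto
      also have "SX (\<lambda>x. (x $ k)^2 * (x $ k)^2) = Aq"
        unfolding Aq_def using SX_1[of k 4] by (simp flip: power_add)
      also have "(\<Sum>j\<in>UNIV-{k}. SX (\<lambda>x. (x $ k)^2 * (x $ j)^2)) = (\<Sum>j\<in>UNIV-{k}. Bq)"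
        by (rule sum.cong[OF refl]) (auto intro: SX_2)
      also have "\<dots> = (n - 1) * Bq" by (simp add: n_def card_Diff_singleton of_nat_diff)
      finally show "(\<Sum>j\<in>UNIV. SX (\<lambda>x. (x $ k)^2 * (x $ j)^2)) = Aq + (n - 1) * Bq" .
    qed
    also have "\<dots> = n * (Aq + (n - 1) * Bq)" by (simp add: n_def)
    finally show ?thesis .
  qed
  have E_odd: "E (mon a) = 0" if "odd (a i)" for a i
  proof -
    have "sphere_avg \<rho> (mon a) = 0" for \<rho>
      by (rule sa_odd[OF cont_mon, of _ i]) (use that in \<open>simp add: mon_flip\<close>)
    then show ?thesis using SX_odd[of a i, OF that] by (simp add: E_def)
  qed
  have E_0: "E (\<lambda>x. 1) = 0"
  proof -
    have "sphere_avg (norm x) (\<lambda>x::real^'n. 1) = 1" if "x \<in> X" for x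
      by (rule sa_const) (use nz that in auto)
    then show ?thesis by (simp add: E_def SX_def)
  qed
  have E_2: "E (\<lambda>x. (x $ i)^2) = 0" for i
  proof -
    have "sphere_avg (norm x) (\<lambda>x::real^'n. (x $ i)^2) = (norm x)^2 / n" if "x \<in> X" for x
      using sa_sq[OF nz[OF that], of i] by (simp add: n_def)
    then have "(\<Sum>x\<in>X. w x * sphere_avg (norm x) (\<lambda>x::real^'n. (x $ i)^2)) = SX (\<lambda>x. (norm x)^2) / n"
      by (simp add: SX_def sum_divide_distrib)
    then show ?thesis using N2 SX_1[of i 2] n2 by (simp add: E_def)
  qed
  have E_4: "E (\<lambda>x. (x $ i)^4) = 3 * (Aq + (n - 1) * Bq) / (n + 2) - Aq" for i
  proof -
    have "sphere_avg (norm x) (\<lambda>x::real^'n. (x $ i)^4) = 3 * (norm x)^4 / (n * (n + 2))" if "x \<in> X" for x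
      using sa_4[OF nz[OF that], of i] by (simp add: n_def algebra_simps)
    then have "(\<Sum>x\<in>X. w x * sphere_avg (norm x) (\<lambda>x::real^'n. (x $ i)^4)) = 3 * SX (\<lambda>x. (norm x)^4) / (n * (n + 2))"
      by (simp add: SX_def sum_divide_distrib sum_distrib_left mult.assoc mult.left_commute)
    then show ?thesis using N4 SX_1[of i 4] n2 by (simp add: E_def Aq_def)
  qed
  have E_22: "E (\<lambda>x. (x $ i)^2 * (x $ j)^2) = (Aq + (n - 1) * Bq) / (n + 2) - Bq" if ij: "i \<noteq> j" for i j
  proof -
    have "sphere_avg (norm x) (\<lambda>x::real^'n. (x $ i)^2 * (x $ j)^2) = (norm x)^4 / (n * (n + 2))" if "x \<in> X" for x
      using sa_22[OF nz[OF that] ij] by (simp add: n_def algebra_simps)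
    then have "(\<Sum>x\<in>X. w x * sphere_avg (norm x) (\<lambda>x::real^'n. (x $ i)^2 * (x $ j)^2)) = SX (\<lambda>x. (norm x)^4) / (n * (n + 2))"
      by (simp add: SX_def sum_divide_distrib)
    then show ?thesis using N4 SX_2[OF ij] n2 by (simp add: E_def)
  qed
  have key: "E (\<lambda>x. (x $ i0)^2 * (x $ j0)^2) = 0 \<longleftrightarrow> Aq = 3 * Bq"
  proof -
    have "(Aq + (n - 1) * Bq) / (n + 2) - Bq = (Aq - 3 * Bq) / (n + 2)" using n2 by (simp add: field_simps)
    then show ?thesis using E_22[OF ij0] n2 by simp
  qed
  have E4z: "E (\<lambda>x. (x $ i)^4) = 0" if "Aq = 3 * Bq" for i
  proof -
    have "3 * (Aq + (n - 1) * Bq) / (n + 2) - Aq = 0" using n2 that by (simp add: field_simps)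
    then show ?thesis using E_4 by simp
  qed
  have E22z: "E (\<lambda>x. (x $ i)^2 * (x $ j)^2) = 0" if "Aq = 3 * Bq" "i \<noteq> j" for i j
  proof -
    have "(Aq + (n - 1) * Bq) / (n + 2) - Bq = 0" using n2 that by (simp add: field_simps)
    then show ?thesis using E_22[OF that(2)] by simp
  qed
  have E_mon: "E (mon a) = 0" if AB: "Aq = 3 * Bq" and s: "(\<Sum>i\<in>UNIV. a i) \<le> 5" for a
  proof (cases "\<exists>i. odd (a i)")
    case True
    then show ?thesis using E_odd by blast
  next
    case False
    then have ev: "\<And>i. even (a i)" by blast
    from mon_class[OF ev s] show ?thesis
    proof (elim disjE exE conjE)
      assume "a = (\<lambda>_. 0)"
      then have "mon a = (\<lambda>x::real^'n. 1)" by (simp add: fun_eq_iff mon_def)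
      then show ?thesis using E_0 by simp
    next
      fix i assume "a = (\<lambda>k. if k = i then 2 else 0)"
      then have "mon a = (\<lambda>x::real^'n. (x $ i)^2)" by (intro ext) (simp add: mon_1)
      then show ?thesis using E_2 by simp
    next
      fix i assume "a = (\<lambda>k. if k = i then 4 else 0)"
      then have "mon a = (\<lambda>x::real^'n. (x $ i)^4)" by (intro ext) (simp add: mon_1)
      then show ?thesis using E4z[OF AB] by simp
    next
      fix i j assume ij: "i \<noteq> j" and "a = (\<lambda>k. if k = i then 2 else if k = j then 2 else 0)"
      then have "mon a = (\<lambda>x::real^'n. (x $ i)^2 * (x $ j)^2)" by (intro ext) (simp add: mon_2)
      then show ?thesis using E22z[OF AB ij] by simp
    qed
  qed
  have E_lin: "E f = (\<Sum>a\<in>A. c a * E (mon a))"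
    if A: "finite A" and f: "\<And>x. f x = (\<Sum>a\<in>A. c a * (\<Prod>i\<in>UNIV. (x $ i) ^ a i))" for f A c
  proof -
    have feq: "f = (\<lambda>x. \<Sum>a\<in>A. c a * mon a x)" by (simp add: fun_eq_iff f mon_def)
    have L: "sphere_avg \<rho> f = (\<Sum>a\<in>A. c a * sphere_avg \<rho> (mon a))" for \<rho>
      unfolding feq by (subst sa_sum[OF A]) (auto intro!: continuous_intros cont_mon simp: sa_cmult)
    show ?thesis
      unfolding E_def SX_def L
      by (simp add: feq sum_distrib_left sum.swap[of _ X] sum_subtractf[symmetric] algebra_simps)
  qed
  have poly22: "poly_fun_deg 5 (\<lambda>x::real^'n. (x $ i0)^2 * (x $ j0)^2)"
  proof -
    define a where "a = (\<lambda>k. if k = i0 then 2 else if k = j0 then 2 else (0::nat))"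
    have "a = (\<lambda>k. (if k = i0 then 2 else 0) + (if k = j0 then 2 else 0))"
      using ij0 by (auto simp: a_def fun_eq_iff)
    then have sa: "(\<Sum>k\<in>UNIV. a k) = 4" by (simp add: sum.distrib)
    show ?thesis unfolding poly_fun_deg_def
      by (rule exI[of _ "{a}"], rule exI[of _ "\<lambda>_. 1"])
         (simp add: sa mon_2[OF ij0, folded a_def, unfolded mon_def])
  qed
  show ?thesis
  proof
    assume "euclidean_design 5 X w"
    then have "E (\<lambda>x. (x $ i0)^2 * (x $ j0)^2) = 0" using des poly22 by blast
    then show "(\<Sum>x\<in>X. w x * (x $ i0)^4) = 3 * (\<Sum>x\<in>X. w x * ((x $ i0)^2 * (x $ j0)^2))"
      using key by (simp add: Aq_def Bq_def SX_def)
  next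
    assume "(\<Sum>x\<in>X. w x * (x $ i0)^4) = 3 * (\<Sum>x\<in>X. w x * ((x $ i0)^2 * (x $ j0)^2))"
    then have AB: "Aq = 3 * Bq" by (simp add: Aq_def Bq_def SX_def)
    show "euclidean_design 5 X w"
      unfolding des
    proof (intro allI impI)
      fix f :: "real^'n \<Rightarrow> real" assume "poly_fun_deg 5 f"
      then obtain A c where A: "finite A" "\<forall>a\<in>A. (\<Sum>i\<in>UNIV. a i) \<le> 5"
        and f: "\<And>x. f x = (\<Sum>a\<in>A. c a * (\<Prod>i\<in>UNIV. (x $ i) ^ a i))"
        unfolding poly_fun_deg_def by blast
      have "E f = (\<Sum>a\<in>A. c a * E (mon a))" by (rule E_lin[OF A(1) f])
      also have "\<dots> = 0" using A(2) E_mon[OF AB] by simp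
      finally show "E f = 0" .
    qed
  qed
qed


lemma finite_vec_set:
  assumes "finite S"
  shows "finite {x::real^'n. \<forall>i. x $ i \<in> S}"
proof -
  have "{x::real^'n. \<forall>i. x $ i \<in> S} \<subseteq> (\<lambda>f. \<chi> i. f i) ` (PiE UNIV (\<lambda>_. S))"
  proof
    fix x :: "real^'n" assume "x \<in> {x. \<forall>i. x $ i \<in> S}"
    then have "(\<lambda>i. x $ i) \<in> PiE UNIV (\<lambda>_. S)" by auto
    then show "x \<in> (\<lambda>f. \<chi> i. f i) ` (PiE UNIV (\<lambda>_. S))" by (intro image_eqI[of _ _ "\<lambda>i. x $ i"]) auto
  qed
  moreover have "finite (PiE (UNIV::'n set) (\<lambda>_. S))" using assms by (simp add: finite_PiE)
  ultimately show ?thesis by (meson finite_imageI finite_subset)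
qed

lemma finite_Ink: "finite (Ink k :: (real^'n) set)"
  by (rule finite_subset[OF _ finite_vec_set[of "{-1,0,1}"]]) (auto simp: Ink_def)

lemma nz_scale: "s \<noteq> 0 \<Longrightarrow> {i. (s *\<^sub>R y) $ i \<noteq> 0} = {i. (y::real^'n) $ i \<noteq> 0}"
  by auto

lemma invol_bij: "(\<And>y. T (T y) = y) \<Longrightarrow> (\<And>y. y \<in> A \<Longrightarrow> T y \<in> A) \<Longrightarrow> bij_betw T A A"
  by (rule bij_betw_byWitness[of A T T]) auto

lemma flip_Ink: "y \<in> Ink k \<Longrightarrow> flip i y \<in> (Ink k :: (real^'n) set)"
proof -
  assume y: "y \<in> Ink k"
  have "{j. flip i y $ j \<noteq> 0} = {j. y $ j \<noteq> 0}" by (auto simp: flip_nth)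
  moreover have "\<forall>j. flip i y $ j \<in> {-1, 0, 1}" using y by (auto simp: Ink_def flip_nth)
  ultimately show ?thesis using y by (simp add: Ink_def)
qed

lemma sw_Ink: "y \<in> Ink k \<Longrightarrow> sw a b y \<in> (Ink k :: (real^'n) set)"
proof -
  assume y: "y \<in> Ink k"
  have "{j. sw a b y $ j \<noteq> 0} = swp a b ` {j. y $ j \<noteq> 0}"
  proof (intro equalityI subsetI)
    fix j assume "j \<in> {j. sw a b y $ j \<noteq> 0}"
    then have "swp a b j \<in> {j. y $ j \<noteq> 0}" by (simp add: sw_nth)
    then show "j \<in> swp a b ` {j. y $ j \<noteq> 0}" by (metis image_eqI swp_swp)
  next
    fix j assume "j \<in> swp a b ` {j. y $ j \<noteq> 0}"
    then obtain m where "y $ m \<noteq> 0" "j = swp a b m" by blast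
    then show "j \<in> {j. sw a b y $ j \<noteq> 0}" by (simp add: sw_nth)
  qed
  moreover have "inj_on (swp a b) {j. y $ j \<noteq> 0}" by (metis inj_onI swp_swp)
  ultimately have "card {j. sw a b y $ j \<noteq> 0} = card {j. y $ j \<noteq> 0}"
    using card_image by metis
  moreover have "\<forall>j. sw a b y $ j \<in> {-1, 0, 1}" using y by (auto simp: Ink_def sw_nth)
  ultimately show ?thesis using y by (simp add: Ink_def)
qed

lemma sum_Ink_flip: "(\<Sum>y\<in>Ink k. F (flip i y)) = (\<Sum>y\<in>(Ink k :: (real^'n) set). F y)"
  using sum.reindex_bij_betw[OF invol_bij[of "flip i" "Ink k", OF flip_flip flip_Ink]] by simp

lemma sum_Ink_sw: "(\<Sum>y\<in>Ink k. F (sw a b y)) = (\<Sum>y\<in>(Ink k :: (real^'n) set). F y)"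
  using sum.reindex_bij_betw[OF invol_bij[of "sw a b" "Ink k", OF sw_sw sw_Ink]] by simp

lemma flip_scale: "flip i (s *\<^sub>R y) = s *\<^sub>R flip i (y::real^'n)"
  by (simp add: vec_eq_iff flip_nth)
lemma sw_scale: "sw a b (s *\<^sub>R y) = s *\<^sub>R sw a b (y::real^'n)"
  by (simp add: vec_eq_iff sw_nth)

lemma Ink_card: "y \<in> Ink k \<Longrightarrow> card {i. y $ i \<noteq> 0} = k"
  by (simp add: Ink_def)

lemma Ink_ne0: "y \<in> Ink k \<Longrightarrow> k \<ge> 1 \<Longrightarrow> y \<noteq> 0"
  by (auto simp: Ink_def)

lemma sum_XJ:
  assumes J: "J \<subseteq> {1..CARD('n)}" and r: "\<forall>k\<in>J. r k > 0"
  shows "(\<Sum>x\<in>(XJ J r :: (real^'n) set). shellw wk x * f x)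
       = (\<Sum>k\<in>J. wk k * (\<Sum>y\<in>Ink k. f ((r k / sqrt k) *\<^sub>R y)))"
proof -
  have finJ: "finite J" using J finite_subset by blast
  have sne: "k \<in> J \<Longrightarrow> r k / sqrt k \<noteq> 0" for k using r J by auto
  have "(\<Sum>x\<in>XJ J r. shellw wk x * f x) = (\<Sum>k\<in>J. \<Sum>x\<in>(\<lambda>y. (r k / sqrt k) *\<^sub>R y) ` Ink k. shellw wk x * f x)"
    unfolding XJ_def
  proof (rule sum.UNION_disjoint[OF finJ])
    show "\<forall>k\<in>J. finite ((\<lambda>y::real^'n. (r k / sqrt k) *\<^sub>R y) ` Ink k)" using finite_Ink by blast
    show "\<forall>k\<in>J. \<forall>k'\<in>J. k \<noteq> k' \<longrightarrow> (\<lambda>y::real^'n. (r k / sqrt k) *\<^sub>R y) ` Ink k \<inter> (\<lambda>y. (r k' / sqrt k') *\<^sub>R y) ` Ink k' = {}"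
    proof (intro ballI impI)
      fix k k' assume kJ: "k \<in> J" and k'J: "k' \<in> J" and kk: "k \<noteq> k'"
      show "(\<lambda>y::real^'n. (r k / sqrt k) *\<^sub>R y) ` Ink k \<inter> (\<lambda>y. (r k' / sqrt k') *\<^sub>R y) ` Ink k' = {}"
      proof (rule ccontr)
        assume "\<not> ?thesis"
        then obtain y y' where y: "y \<in> Ink k" and y': "y' \<in> Ink k'" and eq: "(r k / sqrt k) *\<^sub>R y = (r k' / sqrt k') *\<^sub>R (y' :: real^'n)"
          by blast
        have "card {i. ((r k / sqrt k) *\<^sub>R y) $ i \<noteq> 0} = k" unfolding nz_scale[OF sne[OF kJ]] by (rule Ink_card[OF y])
        moreover have "card {i. ((r k' / sqrt k') *\<^sub>R y') $ i \<noteq> 0} = k'" unfolding nz_scale[OF sne[OF k'J]] by (rule Ink_card[OF y'])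
        ultimately show False using eq kk by simp
      qed
    qed
  qed
  also have "\<dots> = (\<Sum>k\<in>J. wk k * (\<Sum>y\<in>Ink k. f ((r k / sqrt k) *\<^sub>R y)))"
  proof (rule sum.cong[OF refl])
    fix k assume kJ: "k \<in> J"
    have inj: "inj_on (\<lambda>y::real^'n. (r k / sqrt k) *\<^sub>R y) (Ink k)"
      using sne[OF kJ] by (auto simp: inj_on_def)
    have "(\<Sum>x\<in>(\<lambda>y. (r k / sqrt k) *\<^sub>R y) ` Ink k. shellw wk x * f x) = (\<Sum>y\<in>Ink k. shellw wk ((r k / sqrt k) *\<^sub>R y) * f ((r k / sqrt k) *\<^sub>R (y::real^'n)))"
      by (simp add: sum.reindex[OF inj])
    also have "\<dots> = (\<Sum>y\<in>Ink k. wk k * f ((r k / sqrt k) *\<^sub>R (y::real^'n)))"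
    proof (rule sum.cong[OF refl])
      fix y :: "real^'n" assume y: "y \<in> Ink k"
      have "shellw wk ((r k / sqrt k) *\<^sub>R y) = wk k"
        unfolding shellw_def nz_scale[OF sne[OF kJ]] Ink_card[OF y] ..
      then show "shellw wk ((r k / sqrt k) *\<^sub>R y) * f ((r k / sqrt k) *\<^sub>R y) = wk k * f ((r k / sqrt k) *\<^sub>R y)" by simp
    qed
    finally show "(\<Sum>x\<in>(\<lambda>y. (r k / sqrt k) *\<^sub>R y) ` Ink k. shellw wk x * f x) = wk k * (\<Sum>y\<in>Ink k. f ((r k / sqrt k) *\<^sub>R (y::real^'n)))"
      by (simp add: sum_distrib_left)
  qed
  finally show ?thesis .
qed

lemma XJ_finite: "J \<subseteq> {1..CARD('n)} \<Longrightarrow> finite (XJ J r :: (real^'n) set)"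
  unfolding XJ_def using finite_Ink by (intro finite_UN_I) (auto intro: finite_subset)

lemma XJ_mem: "x \<in> XJ J r \<Longrightarrow> \<exists>k\<in>J. \<exists>y\<in>Ink k. x = (r k / sqrt k) *\<^sub>R y"
  unfolding XJ_def by auto

lemma XJ_0:
  assumes J: "J \<subseteq> {1..CARD('n)}" and r: "\<forall>k\<in>J. r k > 0"
  shows "0 \<notin> (XJ J r :: (real^'n) set)"
proof
  assume "0 \<in> (XJ J r :: (real^'n) set)"
  then obtain k y where k: "k \<in> J" and y: "y \<in> (Ink k :: (real^'n) set)" and eq: "0 = (r k / sqrt k) *\<^sub>R y"
    using XJ_mem by blast
  have "k \<ge> 1" using J k by auto
  then have "y \<noteq> 0" using Ink_ne0[OF y] by simp
  moreover have "r k / sqrt k \<noteq> 0" using r k \<open>k \<ge> 1\<close> by auto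
  ultimately show False using eq by simp
qed

lemma XJ_w:
  assumes J: "J \<subseteq> {1..CARD('n)}" and r: "\<forall>k\<in>J. r k > 0" and w: "\<forall>k\<in>J. wk k > 0"
  shows "\<forall>x\<in>(XJ J r :: (real^'n) set). shellw wk x > 0"
proof
  fix x :: "real^'n" assume "x \<in> XJ J r"
  then obtain k y where k: "k \<in> J" and y: "y \<in> (Ink k :: (real^'n) set)" and eq: "x = (r k / sqrt k) *\<^sub>R y"
    using XJ_mem by blast
  have "r k / sqrt k \<noteq> 0" using r k J by auto
  have "shellw wk x = wk k" unfolding eq shellw_def nz_scale[OF \<open>r k / sqrt k \<noteq> 0\<close>] Ink_card[OF y] ..
  then show "shellw wk x > 0" using w k by simp
qed

lemma XJ_invf:
  assumes J: "J \<subseteq> {1..CARD('n)}" and r: "\<forall>k\<in>J. r k > 0"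
  shows "(\<Sum>x\<in>(XJ J r :: (real^'n) set). shellw wk x * f (flip i x)) = (\<Sum>x\<in>XJ J r. shellw wk x * f x)"
  unfolding sum_XJ[OF J r] flip_scale by (simp add: sum_Ink_flip[where F="\<lambda>y. f (_ *\<^sub>R y)"])

lemma XJ_invs:
  assumes J: "J \<subseteq> {1..CARD('n)}" and r: "\<forall>k\<in>J. r k > 0"
  shows "(\<Sum>x\<in>(XJ J r :: (real^'n) set). shellw wk x * f (sw a b x)) = (\<Sum>x\<in>XJ J r. shellw wk x * f x)"
  unfolding sum_XJ[OF J r] sw_scale by (simp add: sum_Ink_sw[where F="\<lambda>y. f (_ *\<^sub>R y)"])

definition PP :: "'n::finite \<Rightarrow> nat \<Rightarrow> real" where
  "PP i0 k = (\<Sum>y\<in>(Ink k :: (real^'n) set). (y $ i0)^2)"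

lemma Ink_sq: "y \<in> Ink k \<Longrightarrow> (y $ i)^2 = (if y $ i \<noteq> 0 then 1 else 0)"
  by (auto simp: Ink_def) (metis insert_iff power2_minus power_one singletonD)

lemma Ink_4: "y \<in> Ink k \<Longrightarrow> (y $ i)^4 = (y $ i)^2"
proof -
  assume "y \<in> Ink k"
  then have "(y $ i)^2 = (if y $ i \<noteq> 0 then 1 else 0)" by (rule Ink_sq)
  moreover have "(y $ i)^4 = ((y $ i)^2)^2" by simp
  ultimately show ?thesis by simp
qed

lemma Ink_sumsq: "y \<in> Ink k \<Longrightarrow> (\<Sum>j\<in>UNIV. (y $ j)^2) = real k"
proof -
  assume y: "y \<in> Ink k"
  have "(\<Sum>j\<in>UNIV. (y $ j)^2) = (\<Sum>j\<in>UNIV. if y $ j \<noteq> 0 then 1 else (0::real))"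
    using Ink_sq[OF y] by simp
  also have "\<dots> = (\<Sum>j\<in>{j\<in>UNIV. y $ j \<noteq> 0}. 1)" by (rule sum.inter_filter[symmetric]) simp
  also have "\<dots> = real (card {j. y $ j \<noteq> 0})" unfolding sum_constant by simp
  finally show ?thesis using Ink_card[OF y] by simp
qed

lemma QP:
  fixes i0 j0 :: "'n::finite"
  assumes ij: "i0 \<noteq> j0"
  shows "(real CARD('n) - 1) * (\<Sum>y\<in>(Ink k :: (real^'n) set). (y $ i0)^2 * (y $ j0)^2) = (real k - 1) * PP i0 k"
proof -
  define Q where "Q = (\<Sum>y\<in>(Ink k :: (real^'n) set). (y $ i0)^2 * (y $ j0)^2)"
  have each: "(\<Sum>y\<in>(Ink k :: (real^'n) set). (y $ i0)^2 * (y $ j)^2) = Q" if "j \<noteq> i0" for j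
    using sum_Ink_sw[of "\<lambda>y. (y $ i0)^2 * (y $ j0)^2" j0 j k] ij that
    by (simp add: Q_def sw_nth swp_def)
  have "(\<Sum>j\<in>UNIV-{i0}. \<Sum>y\<in>(Ink k :: (real^'n) set). (y $ i0)^2 * (y $ j)^2) = (\<Sum>j\<in>UNIV-{i0}. Q)"
    by (rule sum.cong[OF refl]) (simp add: each)
  also have "\<dots> = (real CARD('n) - 1) * Q" by (simp add: card_Diff_singleton of_nat_diff)
  finally have L: "(\<Sum>j\<in>UNIV-{i0}. \<Sum>y\<in>(Ink k :: (real^'n) set). (y $ i0)^2 * (y $ j)^2) = (real CARD('n) - 1) * Q" .
  have "(\<Sum>j\<in>UNIV-{i0}. \<Sum>y\<in>(Ink k :: (real^'n) set). (y $ i0)^2 * (y $ j)^2)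
      = (\<Sum>y\<in>(Ink k :: (real^'n) set). (y $ i0)^2 * (\<Sum>j\<in>UNIV-{i0}. (y $ j)^2))"
    by (simp add: sum.swap[of _ "UNIV-{i0}"] sum_distrib_left)
  also have "\<dots> = (\<Sum>y\<in>(Ink k :: (real^'n) set). (real k - 1) * (y $ i0)^2)"
  proof (rule sum.cong[OF refl])
    fix y :: "real^'n" assume y: "y \<in> Ink k"
    have "(\<Sum>j\<in>UNIV. (y $ j)^2) = (y $ i0)^2 + (\<Sum>j\<in>UNIV-{i0}. (y $ j)^2)"
      by (rule sum.remove) auto
    then have "(\<Sum>j\<in>UNIV-{i0}. (y $ j)^2) = real k - (y $ i0)^2" using Ink_sumsq[OF y] by simp
    moreover have "(y $ i0)^2 * (real k - (y $ i0)^2) = (real k - 1) * (y $ i0)^2"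
      using Ink_sq[OF y, of i0] by (cases "y $ i0 = 0") (auto simp: algebra_simps)
    ultimately show "(y $ i0)^2 * (\<Sum>j\<in>UNIV-{i0}. (y $ j)^2) = (real k - 1) * (y $ i0)^2" by simp
  qed
  also have "\<dots> = (real k - 1) * PP i0 k" by (simp add: PP_def sum_distrib_left)
  finally show ?thesis using L by (simp add: Q_def)
qed

lemma PP_card: "PP i0 k = real (card {y\<in>(Ink k :: (real^'n) set). y $ i0 \<noteq> 0})"
proof -
  have "PP i0 k = (\<Sum>y\<in>(Ink k :: (real^'n) set). if y $ i0 \<noteq> 0 then 1 else 0)"
    unfolding PP_def by (rule sum.cong[OF refl]) (rule Ink_sq)
  also have "\<dots> = (\<Sum>y\<in>{y\<in>(Ink k :: (real^'n) set). y $ i0 \<noteq> 0}. 1)"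
    by (rule sum.inter_filter[symmetric]) (rule finite_Ink)
  also have "\<dots> = real (card {y\<in>(Ink k :: (real^'n) set). y $ i0 \<noteq> 0})" unfolding sum_constant by simp
  finally show ?thesis .
qed

lemma PP_pos:
  fixes i0 :: "'n::finite"
  assumes k1: "1 \<le> k" and kn: "k \<le> CARD('n)"
  shows "PP i0 k > 0"
proof -
  have "card (UNIV - {i0}) = CARD('n) - 1" by (simp add: card_Diff_singleton)
  then have "k - 1 \<le> card (UNIV - {i0})" using kn by simp
  then obtain K' where K': "K' \<subseteq> UNIV - {i0}" "card K' = k - 1" "finite K'"
    by (rule obtain_subset_with_card_n)
  define K where "K = insert i0 K'"
  have "i0 \<notin> K'" using K'(1) by auto
  then have cK: "card K = k" using K' k1 by (simp add: K_def card_insert_disjoint)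
  define y where "y = (\<chi> i. if i \<in> K then (1::real) else 0)"
  have "{i. y $ i \<noteq> 0} = K" by (auto simp: y_def)
  then have yI: "y \<in> (Ink k :: (real^'n) set)" using cK by (auto simp: Ink_def y_def)
  have "(y $ i0)^2 \<le> PP i0 k"
    unfolding PP_def by (rule member_le_sum[OF yI]) (auto intro: finite_Ink)
  moreover have "(y $ i0)^2 = 1" by (simp add: y_def K_def)
  ultimately show ?thesis by simp
qed

lemma PP_1: "PP (i0::'n::finite) 1 = 2"
proof -
  define e :: "real^'n" where "e = axis i0 1"
  have "{y\<in>(Ink 1 :: (real^'n) set). y $ i0 \<noteq> 0} = {e, -e}"
  proof (intro equalityI subsetI)
    fix y assume "y \<in> {y\<in>(Ink 1 :: (real^'n) set). y $ i0 \<noteq> 0}"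
    then have y: "y \<in> Ink 1" and yi: "y $ i0 \<noteq> 0" by auto
    then have c1: "card {i. y $ i \<noteq> 0} = 1" by (simp add: Ink_def)
    then obtain a where a: "{i. y $ i \<noteq> 0} = {a}" using card_1_singletonE by blast
    then have "a = i0" using yi by auto
    then have z: "i \<noteq> i0 \<Longrightarrow> y $ i = 0" for i using a by auto
    have "y $ i0 \<in> {-1, 0, 1}" using y by (simp add: Ink_def)
    then have "y $ i0 = 1 \<or> y $ i0 = -1" using yi by auto
    then show "y \<in> {e, -e}"
    proof
      assume "y $ i0 = 1" then have "y = e" using z by (auto simp: vec_eq_iff e_def axis_def)
      then show ?thesis by simp
    next
      assume "y $ i0 = -1" then have "y = -e" using z by (auto simp: vec_eq_iff e_def axis_def)
      then show ?thesis by simp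
    qed
  next
    fix y assume "y \<in> {e, -e}"
    moreover have "{i. e $ i \<noteq> 0} = {i0}" "{i. (-e) $ i \<noteq> 0} = {i0}" by (auto simp: e_def axis_def)
    moreover have "\<forall>i. e $ i \<in> {-1,0,1}" "\<forall>i. (-e) $ i \<in> {-1,0,1}" by (auto simp: e_def axis_def)
    ultimately show "y \<in> {y\<in>(Ink 1 :: (real^'n) set). y $ i0 \<noteq> 0}"
      by (auto simp: Ink_def e_def axis_def)
  qed
  moreover have "e \<noteq> -e" by (auto simp: e_def vec_eq_iff axis_def)
  ultimately show ?thesis by (simp add: PP_card)
qed

lemma PP_n: "PP (i0::'n::finite) CARD('n) = 2 ^ CARD('n)"
proof -
  define Sg where "Sg = {y::real^'n. \<forall>i. y $ i \<in> {-1, 1}}"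
  have "{y\<in>(Ink CARD('n) :: (real^'n) set). y $ i0 \<noteq> 0} = Sg"
  proof (intro equalityI subsetI)
    fix y assume "y \<in> {y\<in>(Ink CARD('n) :: (real^'n) set). y $ i0 \<noteq> 0}"
    then have y: "y \<in> Ink CARD('n)" by auto
    then have "card {i. y $ i \<noteq> 0} = CARD('n)" by (simp add: Ink_def)
    then have "{i. y $ i \<noteq> 0} = UNIV" by (metis card_subset_eq finite subset_UNIV)
    then show "y \<in> Sg" using y by (auto simp: Ink_def Sg_def)
  next
    fix y assume "y \<in> Sg"
    then have yy: "\<forall>i. y $ i = -1 \<or> y $ i = 1" by (simp add: Sg_def)
    have "y $ i \<noteq> 0" for i using yy by (metis neg_0_equal_iff_equal zero_neq_one)
    then have "{i. y $ i \<noteq> 0} = UNIV" by auto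
    moreover have "\<forall>i. y $ i \<in> {-1,0,1}" using yy by auto
    ultimately show "y \<in> {y\<in>(Ink CARD('n) :: (real^'n) set). y $ i0 \<noteq> 0}" by (auto simp: Ink_def)
  qed
  moreover have "card Sg = 2 ^ CARD('n)"
  proof -
    have "bij_betw (\<lambda>S. (\<chi> i. if i \<in> S then 1 else -1) :: real^'n) (Pow UNIV) Sg"
    proof (rule bij_betwI')
      fix S T :: "'n set" assume "S \<in> Pow UNIV" "T \<in> Pow UNIV"
      show "((\<chi> i. if i \<in> S then (1::real) else -1) = (\<chi> i. if i \<in> T then (1::real) else -1)) = (S = T)"
        by (auto simp: vec_eq_iff)
    next
      fix S :: "'n set" assume "S \<in> Pow UNIV"
      show "(\<chi> i. if i \<in> S then (1::real) else -1) \<in> Sg" by (simp add: Sg_def)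
    next
      fix y assume "y \<in> Sg"
      then have "y = (\<chi> i. if i \<in> {i. y $ i = 1} then 1 else -1)"
        by (auto simp: Sg_def vec_eq_iff)
      then show "\<exists>S\<in>Pow UNIV. y = (\<chi> i. if i \<in> S then 1 else -1)" by blast
    qed
    then have "card (Pow (UNIV :: 'n set)) = card Sg" by (rule bij_betw_same_card)
    moreover have "card (Pow (UNIV :: 'n set)) = 2 ^ CARD('n)" by (rule card_Pow) simp
    ultimately show ?thesis by simp
  qed
  ultimately show ?thesis by (simp add: PP_card)
qed

lemma char_XJ:
  fixes J :: "nat set" and r wk :: "nat \<Rightarrow> real" and i0 :: "'n::finite"
  assumes n2: "CARD('n) \<ge> 2" and J: "J \<subseteq> {1..CARD('n)}" and r: "\<forall>k\<in>J. r k > 0" and w: "\<forall>k\<in>J. wk k > 0"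
  shows "euclidean_design 5 (XJ J r :: (real^'n) set) (shellw wk) \<longleftrightarrow>
     (\<Sum>k\<in>J. wk k * (r k / sqrt k)^4 * PP i0 k * (real CARD('n) + 2 - 3 * real k)) = 0"
proof -
  have "\<exists>j0::'n. i0 \<noteq> j0"
  proof (rule ccontr)
    assume "\<not> ?thesis"
    then have "(UNIV::'n set) = {i0}" by auto
    then have "CARD('n) = card {i0}" by (rule arg_cong)
    then have "CARD('n) = 1" by simp
    then show False using n2 by simp
  qed
  then obtain j0 :: 'n where ij: "i0 \<noteq> j0" by blast
  define s where "s k = r k / sqrt k" for k
  define Q where "Q k = (\<Sum>y\<in>(Ink k :: (real^'n) set). (y $ i0)^2 * (y $ j0)^2)" for k
  define n where "n = real CARD('n)"
  have G: "euclidean_design 5 (XJ J r :: (real^'n) set) (shellw wk) \<longleftrightarrow>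
    (\<Sum>x\<in>(XJ J r :: (real^'n) set). shellw wk x * (x $ i0)^4) = 3 * (\<Sum>x\<in>(XJ J r :: (real^'n) set). shellw wk x * ((x $ i0)^2 * (x $ j0)^2))"
    by (rule design_generic[OF XJ_finite[OF J] XJ_0[OF J r] XJ_w[OF J r w] XJ_invf[OF J r] XJ_invs[OF J r] ij])
  have A: "(\<Sum>x\<in>(XJ J r :: (real^'n) set). shellw wk x * (x $ i0)^4) = (\<Sum>k\<in>J. wk k * s k^4 * PP i0 k)"
    unfolding sum_XJ[OF J r]
  proof (rule sum.cong[OF refl])
    fix k assume "k \<in> J"
    have "(\<Sum>y\<in>(Ink k :: (real^'n) set). ((r k / sqrt k) *\<^sub>R y) $ i0 ^ 4) = (\<Sum>y\<in>(Ink k :: (real^'n) set). s k^4 * (y $ i0)^2)"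
    proof (rule sum.cong[OF refl])
      fix y :: "real^'n" assume y: "y \<in> Ink k"
      have "((r k / sqrt k) *\<^sub>R y) $ i0 ^ 4 = s k^4 * (y $ i0)^4"
        by (simp add: s_def power_mult_distrib power_divide)
      then show "((r k / sqrt k) *\<^sub>R y) $ i0 ^ 4 = s k^4 * (y $ i0)^2"
        using Ink_4[OF y, of i0] by simp
    qed
    then show "wk k * (\<Sum>y\<in>(Ink k :: (real^'n) set). ((r k / sqrt k) *\<^sub>R y) $ i0 ^ 4) = wk k * s k ^ 4 * PP i0 k"
      by (simp add: PP_def sum_distrib_left mult.assoc)
  qed
  have B: "(\<Sum>x\<in>(XJ J r :: (real^'n) set). shellw wk x * ((x $ i0)^2 * (x $ j0)^2)) = (\<Sum>k\<in>J. wk k * s k^4 * Q k)"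
    unfolding sum_XJ[OF J r]
  proof (rule sum.cong[OF refl])
    fix k assume "k \<in> J"
    have "(\<Sum>y\<in>(Ink k :: (real^'n) set). (((r k / sqrt k) *\<^sub>R y) $ i0)^2 * (((r k / sqrt k) *\<^sub>R y) $ j0)^2)
        = (\<Sum>y\<in>(Ink k :: (real^'n) set). s k^4 * ((y $ i0)^2 * (y $ j0)^2))"
    proof (rule sum.cong[OF refl])
      fix y :: "real^'n"
      have aux: "(x * u)^2 * (x * v)^2 = x^4 * (u^2 * v^2)" for x u v :: real
        by (simp add: power_mult_distrib eval_nat_numeral algebra_simps)
      show "(((r k / sqrt k) *\<^sub>R y) $ i0)^2 * (((r k / sqrt k) *\<^sub>R y) $ j0)^2 = s k^4 * ((y $ i0)^2 * (y $ j0)^2)"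
        unfolding s_def vector_scaleR_component real_scaleR_def by (rule aux)
    qed
    then show "wk k * (\<Sum>y\<in>(Ink k :: (real^'n) set). (((r k / sqrt k) *\<^sub>R y) $ i0)^2 * (((r k / sqrt k) *\<^sub>R y) $ j0)^2) = wk k * s k ^ 4 * Q k"
      by (simp add: Q_def sum_distrib_left mult.assoc)
  qed
  have QP': "(n - 1) * Q k = (real k - 1) * PP i0 k" for k
    using QP[OF ij, of k] by (simp add: Q_def n_def)
  have "(n - 1) * ((\<Sum>k\<in>J. wk k * s k^4 * PP i0 k) - 3 * (\<Sum>k\<in>J. wk k * s k^4 * Q k))
      = (\<Sum>k\<in>J. wk k * s k^4 * ((n - 1) * PP i0 k - 3 * ((n - 1) * Q k)))"
    by (simp add: sum_distrib_left sum_subtractf[symmetric] algebra_simps)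
  also have "\<dots> = (\<Sum>k\<in>J. wk k * s k^4 * PP i0 k * (n + 2 - 3 * real k))"
    by (rule sum.cong[OF refl]) (subst QP', simp add: algebra_simps)
  finally have E: "(n - 1) * ((\<Sum>k\<in>J. wk k * s k^4 * PP i0 k) - 3 * (\<Sum>k\<in>J. wk k * s k^4 * Q k))
      = (\<Sum>k\<in>J. wk k * s k^4 * PP i0 k * (n + 2 - 3 * real k))" .
  have n1: "n - 1 \<noteq> 0" using n2 by (simp add: n_def)
  show ?thesis
    unfolding G A B
  proof -
    have "(\<Sum>k\<in>J. wk k * s k^4 * PP i0 k) = 3 * (\<Sum>k\<in>J. wk k * s k^4 * Q k) \<longleftrightarrow>
          (n - 1) * ((\<Sum>k\<in>J. wk k * s k^4 * PP i0 k) - 3 * (\<Sum>k\<in>J. wk k * s k^4 * Q k)) = 0"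
      using n1 by simp
    also have "\<dots> \<longleftrightarrow> (\<Sum>k\<in>J. wk k * s k^4 * PP i0 k * (n + 2 - 3 * real k)) = 0"
      unfolding E ..
    finally show "(\<Sum>k\<in>J. wk k * s k^4 * PP i0 k) = 3 * (\<Sum>k\<in>J. wk k * s k^4 * Q k) \<longleftrightarrow>
      (\<Sum>k\<in>J. wk k * (r k / sqrt k)^4 * PP i0 k * (real CARD('n) + 2 - 3 * real k)) = 0"
      by (simp only: s_def n_def)
  qed
qed



lemma single_char:
  fixes r wk :: "nat \<Rightarrow> real"
  assumes n2: "CARD('n::finite) \<ge> 2" and k: "k \<in> {1..CARD('n)}" and r: "r k > 0" and w: "wk k > 0"
  shows "euclidean_design 5 (XJ {k} r :: (real^'n) set) (shellw wk) \<longleftrightarrow> 3 * k = CARD('n) + 2"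
proof -
  define i0 :: 'n where "i0 = undefined"
  have "euclidean_design 5 (XJ {k} r :: (real^'n) set) (shellw wk) \<longleftrightarrow>
     wk k * (r k / sqrt k)^4 * PP i0 k * (real CARD('n) + 2 - 3 * real k) = 0"
    using char_XJ[OF n2, of "{k}" r wk i0] k r w by simp
  also have "\<dots> \<longleftrightarrow> real CARD('n) + 2 - 3 * real k = 0"
  proof -
    have "PP i0 k > 0" using PP_pos[of k i0] k by simp
    moreover have "r k / sqrt k > 0" using r k by simp
    ultimately show ?thesis using w r k by simp
  qed
  also have "\<dots> \<longleftrightarrow> 3 * k = CARD('n) + 2" by linarith
  finally show ?thesis .
qed

lemma multi_char:
  fixes r :: "nat \<Rightarrow> real"
  assumes n2: "CARD('n::finite) \<ge> 2" and J: "J \<subseteq> {1..CARD('n)}" and r: "\<forall>k\<in>J. r k > 0"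
    and cJ: "card J \<ge> 2"
  shows "(\<exists>wk. (\<forall>k\<in>J. wk k > 0) \<and> euclidean_design 5 (XJ J r :: (real^'n) set) (shellw wk))
     \<longleftrightarrow> (\<exists>k1\<in>J. \<exists>k2\<in>J. 3 * k1 < CARD('n) + 2 \<and> CARD('n) + 2 < 3 * k2)"
proof -
  define i0 :: 'n where "i0 = undefined"
  define pos where "pos k = (r k / sqrt k)^4 * PP i0 k" for k
  define cc where "cc k = pos k * (real CARD('n) + 2 - 3 * real k)" for k
  have finJ: "finite J" using J finite_subset by blast
  have pos: "k \<in> J \<Longrightarrow> pos k > 0" for k
  proof -
    assume kJ: "k \<in> J"
    then have "PP i0 k > 0" using PP_pos[of k i0] J by auto
    moreover have "r k / sqrt k > 0" using r kJ J by auto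
    ultimately show ?thesis unfolding pos_def by (intro mult_pos_pos zero_less_power)
  qed
  have char': "euclidean_design 5 (XJ J r :: (real^'n) set) (shellw wk) \<longleftrightarrow> (\<Sum>k\<in>J. wk k * cc k) = 0"
    if "\<forall>k\<in>J. wk k > 0" for wk
    using char_XJ[OF n2 J r that, of i0] by (simp add: cc_def pos_def mult.assoc)
  have notall: False if "\<forall>k\<in>J. 3 * k = CARD('n) + 2"
  proof -
    have "J \<subseteq> {(CARD('n) + 2) div 3}" using that by auto
    then have "card J \<le> card {(CARD('n) + 2) div 3}" by (rule card_mono[rotated]) simp
    then have "card J \<le> 1" by simp
    then show False using cJ by simp
  qed
  show ?thesis
  proof
    assume "\<exists>wk. (\<forall>k\<in>J. wk k > 0) \<and> euclidean_design 5 (XJ J r :: (real^'n) set) (shellw wk)"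
    then obtain wk where w: "\<forall>k\<in>J. wk k > 0" and d: "euclidean_design 5 (XJ J r :: (real^'n) set) (shellw wk)" by blast
    then have s0: "(\<Sum>k\<in>J. wk k * cc k) = 0" using char' by blast
    have ex1: "\<exists>k1\<in>J. 3 * k1 < CARD('n) + 2"
    proof (rule ccontr)
      assume "\<not> ?thesis"
      then have ge: "\<forall>k\<in>J. 3 * k \<ge> CARD('n) + 2" by auto
      have "\<forall>k\<in>J. 0 \<le> - (wk k * cc k)"
      proof
        fix k assume kJ: "k \<in> J"
        have "CARD('n) + 2 \<le> 3 * k" using ge kJ by auto
        then have "real (CARD('n) + 2) \<le> real (3 * k)" by (simp only: of_nat_le_iff)
        then have "real CARD('n) + 2 - 3 * real k \<le> 0" by simp
        then have "cc k \<le> 0" using pos[OF kJ] by (simp add: cc_def mult_nonneg_nonpos)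
        moreover have "wk k > 0" using w kJ by simp
        ultimately have "wk k * cc k \<le> 0" by (simp add: mult_nonneg_nonpos)
        then show "0 \<le> - (wk k * cc k)" by simp
      qed
      moreover have "(\<Sum>k\<in>J. - (wk k * cc k)) = 0" using s0 by (simp add: sum_negf)
      ultimately have "\<forall>k\<in>J. - (wk k * cc k) = 0"
        using sum_nonneg_eq_0_iff[OF finJ, of "\<lambda>k. - (wk k * cc k)"] by simp
      then have "\<forall>k\<in>J. 3 * k = CARD('n) + 2"
      proof (intro ballI)
        fix k assume a: "\<forall>k\<in>J. - (wk k * cc k) = 0" and kJ: "k \<in> J"
        have "wk k * cc k = 0" using a kJ by simp
        moreover have "wk k \<noteq> 0" using w kJ by auto
        ultimately have "cc k = 0" by simp
        then have "real CARD('n) + 2 - 3 * real k = 0" using pos[OF \<open>k \<in> J\<close>] by (simp add: cc_def)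
        then have "real (3 * k) = real (CARD('n) + 2)" by simp
        then show "3 * k = CARD('n) + 2" by (simp only: of_nat_eq_iff)
      qed
      then show False by (rule notall)
    qed
    have ex2: "\<exists>k2\<in>J. CARD('n) + 2 < 3 * k2"
    proof (rule ccontr)
      assume "\<not> ?thesis"
      then have ge: "\<forall>k\<in>J. 3 * k \<le> CARD('n) + 2" by auto
      have "\<forall>k\<in>J. 0 \<le> wk k * cc k"
      proof
        fix k assume kJ: "k \<in> J"
        have "3 * k \<le> CARD('n) + 2" using ge kJ by auto
        then have "real (3 * k) \<le> real (CARD('n) + 2)" by (simp only: of_nat_le_iff)
        then have "real CARD('n) + 2 - 3 * real k \<ge> 0" by simp
        then have "cc k \<ge> 0" using pos[OF kJ] by (simp add: cc_def)
        moreover have "0 \<le> wk k" using w kJ less_imp_le by blast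
        ultimately show "0 \<le> wk k * cc k" by (simp add: mult_nonneg_nonneg)
      qed
      then have "\<forall>k\<in>J. wk k * cc k = 0"
        using sum_nonneg_eq_0_iff[OF finJ, of "\<lambda>k. wk k * cc k"] s0 by simp
      then have "\<forall>k\<in>J. 3 * k = CARD('n) + 2"
      proof (intro ballI)
        fix k assume a: "\<forall>k\<in>J. wk k * cc k = 0" and kJ: "k \<in> J"
        have "wk k * cc k = 0" using a kJ by simp
        moreover have "wk k \<noteq> 0" using w kJ by auto
        ultimately have "cc k = 0" by simp
        then have "real CARD('n) + 2 - 3 * real k = 0" using pos[OF \<open>k \<in> J\<close>] by (simp add: cc_def)
        then have "real (3 * k) = real (CARD('n) + 2)" by simp
        then show "3 * k = CARD('n) + 2" by (simp only: of_nat_eq_iff)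
      qed
      then show False by (rule notall)
    qed
    show "\<exists>k1\<in>J. \<exists>k2\<in>J. 3 * k1 < CARD('n) + 2 \<and> CARD('n) + 2 < 3 * k2" using ex1 ex2 by blast
  next
    assume "\<exists>k1\<in>J. \<exists>k2\<in>J. 3 * k1 < CARD('n) + 2 \<and> CARD('n) + 2 < 3 * k2"
    then obtain k1 k2 where k1: "k1 \<in> J" "3 * k1 < CARD('n) + 2" and k2: "k2 \<in> J" "CARD('n) + 2 < 3 * k2" by blast
    define Pp where "Pp = (\<Sum>k\<in>J. if cc k > 0 then cc k else 0)"
    define Nn where "Nn = (\<Sum>k\<in>J. if cc k < 0 then - cc k else 0)"
    have c1: "cc k1 > 0"
    proof -
      have "real CARD('n) + 2 - 3 * real k1 > 0" using k1(2) by linarith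
      then show ?thesis using pos[OF k1(1)] by (simp add: cc_def)
    qed
    have c2: "cc k2 < 0"
    proof -
      have "real CARD('n) + 2 - 3 * real k2 < 0" using k2(2) by linarith
      then show ?thesis using pos[OF k2(1)] by (simp add: cc_def mult_pos_neg)
    qed
    have Pp: "Pp > 0"
    proof -
      have "(if cc k1 > 0 then cc k1 else 0) \<le> Pp"
        unfolding Pp_def by (rule member_le_sum[OF k1(1)]) (auto intro: finJ)
      then show ?thesis using c1 by simp
    qed
    have Nn: "Nn > 0"
    proof -
      have "(if cc k2 < 0 then - cc k2 else 0) \<le> Nn"
        unfolding Nn_def by (rule member_le_sum[OF k2(1)]) (auto intro: finJ)
      then show ?thesis using c2 by simp
    qed
    define wk where "wk k = (if cc k > 0 then Nn else if cc k < 0 then Pp else 1)" for k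
    have w: "\<forall>k\<in>J. wk k > 0" using Pp Nn by (simp add: wk_def)
    have "(\<Sum>k\<in>J. wk k * cc k) = (\<Sum>k\<in>J. Nn * (if cc k > 0 then cc k else 0) - Pp * (if cc k < 0 then - cc k else 0))"
      by (rule sum.cong[OF refl]) (auto simp: wk_def)
    also have "\<dots> = Nn * Pp - Pp * Nn"
      by (simp add: sum_subtractf sum_distrib_left Pp_def Nn_def)
    also have "\<dots> = 0" by simp
    finally have "euclidean_design 5 (XJ J r :: (real^'n) set) (shellw wk)" using char'[OF w] by simp
    then show "\<exists>wk. (\<forall>k\<in>J. wk k > 0) \<and> euclidean_design 5 (XJ J r :: (real^'n) set) (shellw wk)"
      using w by blast
  qed
qed

lemma part3:
  fixes r' wk :: "nat \<Rightarrow> real"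
  assumes n3: "CARD('n::finite) \<ge> 3" and r1: "r' 1 > 0" and rn: "r' CARD('n) > 0"
    and w1: "wk 1 > 0" and wn: "wk CARD('n) > 0"
    and hyp: "(wk 1 / wk CARD('n)) * (r' 1 ^ 4 / r' CARD('n) ^ 4) = 2 ^ CARD('n) / (real CARD('n))\<^sup>2"
  shows "euclidean_design 5 (XJ {1, CARD('n)} r' :: (real^'n) set) (shellw wk)"
proof -
  define n where "n = CARD('n)"
  define i0 :: 'n where "i0 = undefined"
  have n2: "CARD('n) \<ge> 2" using n3 by simp
  have J: "{1, CARD('n)} \<subseteq> {1..CARD('n)}" using n3 by auto
  have r: "\<forall>k\<in>{1, CARD('n)}. r' k > 0" using r1 rn by auto
  have w: "\<forall>k\<in>{1, CARD('n)}. wk k > 0" using w1 wn by auto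
  have ne: "(1::nat) \<noteq> CARD('n)" using n3 by simp
  have rnp: "real n > 0" using n3 by (simp add: n_def)
  have sq: "(sqrt (real n))^4 = (real n)^2"
  proof -
    have "(sqrt (real n))^4 = (sqrt (real n))^(2*2)" by simp
    also have "\<dots> = ((sqrt (real n))^2)^2" by (rule power_mult)
    also have "\<dots> = (real n)^2" using rnp by simp
    finally show ?thesis .
  qed
  define a where "a = wk 1 * r' 1 ^ 4"
  define b where "b = wk n * r' n ^ 4 * 2 ^ n / (real n)^2"
  have ab: "a = b"
  proof -
    have "wk 1 * r' 1 ^ 4 / (wk n * r' n ^ 4) = 2 ^ n / (real n)^2"
      using hyp by (simp add: n_def field_simps)
    then show ?thesis using wn rn rnp by (simp add: a_def b_def n_def field_simps)
  qed
  have "(\<Sum>k\<in>{1, CARD('n)}. wk k * (r' k / sqrt k)^4 * PP i0 k * (real CARD('n) + 2 - 3 * real k))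
      = wk 1 * r' 1 ^ 4 * 2 * (real n - 1) + wk n * (r' n / sqrt n)^4 * 2 ^ n * (2 - 2 * real n)"
  proof -
    have p1: "PP i0 (Suc 0) = 2" using PP_1[of i0] by simp
    show ?thesis using ne by (simp add: p1 PP_n n_def algebra_simps)
  qed
  also have "(r' n / sqrt n)^4 = r' n ^ 4 / (real n)^2" by (simp add: power_divide sq)
  also have "wk 1 * r' 1 ^ 4 * 2 * (real n - 1) + wk n * (r' n ^ 4 / (real n)^2) * 2 ^ n * (2 - 2 * real n)
      = 2 * (real n - 1) * (a - b)" using rnp by (simp add: a_def b_def field_simps)
  also have "\<dots> = 0" using ab by simp
  finally show ?thesis using char_XJ[OF n2 J r w, of i0] by simp
qed

theorem proposition3p2:
  fixes J :: "nat set" and r :: "nat \<Rightarrow> real"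
  assumes n3: "CARD('n::finite) \<ge> 3"
    and Jne: "J \<noteq> {}" and Jsub: "J \<subseteq> {1..CARD('n)}"
    and rpos: "\<forall>k\<in>J. r k > 0"
  shows
   "(card J = 1 \<longrightarrow>
      (CARD('n) mod 3 \<noteq> 1 \<longrightarrow>
         (\<forall>wk. (\<forall>k\<in>J. wk k > 0) \<longrightarrow>
            \<not> euclidean_design 5 (XJ J r :: (real^'n) set) (shellw wk))) \<and>
      (CARD('n) mod 3 = 1 \<longrightarrow>
         (\<forall>k. J = {k} \<longrightarrow>
            (\<forall>wk. (\<forall>k\<in>J. wk k > 0) \<longrightarrow>
               (euclidean_design 5 (XJ J r :: (real^'n) set) (shellw wk)
                  \<longleftrightarrow> 3 * k = CARD('n) + 2)))))
    \<and>
    (card J \<ge> 2 \<longrightarrow>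
      ((\<exists>wk. (\<forall>k\<in>J. wk k > 0) \<and>
             euclidean_design 5 (XJ J r :: (real^'n) set) (shellw wk))
        \<longleftrightarrow> (\<exists>k1\<in>J. \<exists>k2\<in>J. 3 * k1 < CARD('n) + 2 \<and> CARD('n) + 2 < 3 * k2)))
    \<and>
    (\<forall>r' wk. r' 1 > 0 \<and> r' CARD('n) > 0 \<and> wk 1 > 0 \<and> wk CARD('n) > 0 \<and>
       (wk 1 / wk CARD('n)) * (r' 1 ^ 4 / r' CARD('n) ^ 4)
          = 2 ^ CARD('n) / (real CARD('n))\<^sup>2 \<longrightarrow>
       euclidean_design 5 (XJ {1, CARD('n)} r' :: (real^'n) set) (shellw wk))"
proof -
  have n2: "CARD('n) \<ge> 2" using n3 by simp
  have P1: "card J = 1 \<longrightarrow>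
      (CARD('n) mod 3 \<noteq> 1 \<longrightarrow>
         (\<forall>wk. (\<forall>k\<in>J. wk k > 0) \<longrightarrow>
            \<not> euclidean_design 5 (XJ J r :: (real^'n) set) (shellw wk))) \<and>
      (CARD('n) mod 3 = 1 \<longrightarrow>
         (\<forall>k. J = {k} \<longrightarrow>
            (\<forall>wk. (\<forall>k\<in>J. wk k > 0) \<longrightarrow>
               (euclidean_design 5 (XJ J r :: (real^'n) set) (shellw wk)
                  \<longleftrightarrow> 3 * k = CARD('n) + 2))))"
  proof (intro impI conjI allI)
    assume "card J = 1"
    then obtain k where Jk: "J = {k}" using card_1_singletonE by blast
    have k: "k \<in> {1..CARD('n)}" using Jsub Jk by auto
    have rk: "r k > 0" using rpos Jk by auto
    fix wk :: "nat \<Rightarrow> real"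
    assume m: "CARD('n) mod 3 \<noteq> 1" and w: "\<forall>k\<in>J. wk k > 0"
    have "euclidean_design 5 (XJ J r :: (real^'n) set) (shellw wk) \<longleftrightarrow> 3 * k = CARD('n) + 2"
      unfolding Jk by (rule single_char[of k r, OF n2 k rk]) (use w Jk in auto)
    moreover have "3 * k \<noteq> CARD('n) + 2" using m by presburger
    ultimately show "\<not> euclidean_design 5 (XJ J r :: (real^'n) set) (shellw wk)" by simp
  next
    fix k and wk :: "nat \<Rightarrow> real"
    assume Jk: "J = {k}" and w: "\<forall>k\<in>J. wk k > 0"
    have k: "k \<in> {1..CARD('n)}" using Jsub Jk by auto
    have rk: "r k > 0" using rpos Jk by auto
    show "euclidean_design 5 (XJ J r :: (real^'n) set) (shellw wk) \<longleftrightarrow> 3 * k = CARD('n) + 2"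
      unfolding Jk by (rule single_char[of k r, OF n2 k rk]) (use w Jk in auto)
  qed
  have P2: "card J \<ge> 2 \<longrightarrow>
      ((\<exists>wk. (\<forall>k\<in>J. wk k > 0) \<and>
             euclidean_design 5 (XJ J r :: (real^'n) set) (shellw wk))
        \<longleftrightarrow> (\<exists>k1\<in>J. \<exists>k2\<in>J. 3 * k1 < CARD('n) + 2 \<and> CARD('n) + 2 < 3 * k2))"
    using multi_char[OF n2 Jsub rpos] by blast
  have P3: "\<forall>r' wk. r' 1 > 0 \<and> r' CARD('n) > 0 \<and> wk 1 > 0 \<and> wk CARD('n) > 0 \<and>
       (wk 1 / wk CARD('n)) * (r' 1 ^ 4 / r' CARD('n) ^ 4)
          = 2 ^ CARD('n) / (real CARD('n))\<^sup>2 \<longrightarrow>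
       euclidean_design 5 (XJ {1, CARD('n)} r' :: (real^'n) set) (shellw wk)"
    using part3[OF n3] by blast
  show ?thesis using P1 P2 P3 by blast
qed

end
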